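(* Let $1\le p<\infty$, $N,s,N^*\in\mathbb N$ with $s\le N^d$ and $N^*\ge4N$, $r>0$, $c_0>0$, and $f\in Lip^{(N,s,r,c_0)}$. Then for every $0<\tau\le\frac{s}{2N^d(N^* )^{1+pr}}$, $$\|f-N_{2,N^*,\tau}\|_{L^p(\mathbb I^d)}\le c_2(N^* )^{-r}\Big(\frac{s}{N^d}\Big)^{1/p}\qquad\text{and}\qquad\|N_{2,N^*,\tau}\|_{L^\infty(\mathbb I^d)}\le c_3,$$ where $c_2,c_3$ are constants depending only on $d$, $r$, $c_0$ and $\|f\|_{L^\infty(\mathbb I^d)}$.
   Context: $\mathbb I^d=[0,1]^d$, partitioned into $N^d$ congruent sub-cubes of side $1/N$; $f$ is $s$-sparse in $N^d$ partitions if its support lies in the union of at most $s$ of them. With $r=u+v$, $u\in\mathbb N_0$, $0<v\le1$, $Lip^{(r,c_0)}$ is the set of $u$ times differentiable $f:\mathbb I^d\to\mathbb R$ with $|\partial^\alpha f(x)-\partial^\alpha f(x')|\le c_0\|x-x'\|^v$ for all $|\alpha|=u$; $Lip^{(N,s,r,c_0)}$ is the set of its $s$-sparse members. Partition $\mathbb I^d$ into $(N^* )^d$ congruent sub-cubes $B_1,\dots,B_{(N^* )^d}$ of side $1/N^*$ with centers $\xi_1,\dots,\xi_{(N^* )^d}$. For $x_0\in\mathbb R^d$, $p_{u,x_0,f}(x)=\sum_{|\alpha|\le u}\frac{\partial^\alpha f(x_0)}{\alpha!}(x-x_0)^\alpha$ is the Taylor polynomial of degree $u$ of $f$ at $x_0$.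 With $\sigma(t)=\max\{t,0\}$, $T_{\tau,a,b}(t)=\frac1\tau\{\sigma(t-a+\tau)-\sigma(t-a)-\sigma(t-b)+\sigma(t-b-\tau)\}$ and $N_{a,b,\tau}(x)=\sigma\big(\sum_{j=1}^dT_{\tau,a,b}(x^{(j)})-(d-1)\big)$, set $N_{1,N^*,\xi,\tau}(x)=N_{-1/(2N^* ),1/(2N^* ),\tau}(x-\xi)$ and $$N_{2,N^*,\tau}(x)=\sum_{k=1}^{(N^* )^d}p_{u,\xi_k,f}(x)\,N_{1,N^*,\xi_k,\tau}(x).$$ *)

theory Defs
  imports "HOL-Analysis.Analysis"
begin

definition unit_cube :: "(real^'d) set" where
  "unit_cube = {x. \<forall>i. 0 \<le> x$i \<and> x$i \<le> 1}"

definition cube_idx :: "nat \<Rightarrow> ('d::finite \<Rightarrow> nat) set" where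
  "cube_idx N = {k. \<forall>i. k i < N}"

definition subcube :: "nat \<Rightarrow> ('d::finite \<Rightarrow> nat) \<Rightarrow> (real^'d) set" where
  "subcube N k = {x. \<forall>i. real (k i) / real N \<le> x$i \<and> x$i \<le> (real (k i) + 1) / real N}"

definition center :: "nat \<Rightarrow> ('d::finite \<Rightarrow> nat) \<Rightarrow> real^'d" where
  "center N k = (\<chi> i. (real (k i) + 1/2) / real N)"

definition sparse :: "nat \<Rightarrow> nat \<Rightarrow> (real^'d::finite \<Rightarrow> real) \<Rightarrow> bool" where
  "sparse N s f \<longleftrightarrow> (\<exists>S \<subseteq> cube_idx N. card S \<le> s \<and>
      (\<forall>x\<in>unit_cube. f x \<noteq> 0 \<longrightarrow> x \<in> (\<Union>k\<in>S. subcube N k)))"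

text \<open>r = u + v with u a natural number and 0 < v \<le> 1.\<close>
definition ipart :: "real \<Rightarrow> nat" where
  "ipart r = nat (\<lceil>r\<rceil> - 1)"

definition fpart :: "real \<Rightarrow> real" where
  "fpart r = r - real (ipart r)"

definition mi_order :: "('d::finite \<Rightarrow> nat) \<Rightarrow> nat" where
  "mi_order \<alpha> = (\<Sum>i\<in>UNIV. \<alpha> i)"

text \<open>D is the family of partial derivatives of f on I^d up to order u:
  D 0 = f on I^d and D (\<alpha> + e_i) is the partial derivative of D \<alpha> in direction i
  (one-sided at the boundary of I^d) whenever |\<alpha>| < u.\<close>
definition partial_derivs :: "nat \<Rightarrow> (real^'d::finite \<Rightarrow> real)
     \<Rightarrow> (('d \<Rightarrow> nat) \<Rightarrow> real^'d \<Rightarrow> real) \<Rightarrow> bool" where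
  "partial_derivs u f D \<longleftrightarrow>
     (\<forall>x\<in>unit_cube. D (\<lambda>_. 0) x = f x) \<and>
     (\<forall>\<alpha> i. mi_order \<alpha> < u \<longrightarrow> (\<forall>x\<in>unit_cube.
        ((\<lambda>t. D \<alpha> (x + t *\<^sub>R axis i 1)) has_real_derivative D (\<alpha>(i := Suc (\<alpha> i))) x)
          (at 0 within {t. x + t *\<^sub>R axis i 1 \<in> unit_cube})))"

definition Lip_derivs :: "real \<Rightarrow> real \<Rightarrow> (real^'d::finite \<Rightarrow> real)
     \<Rightarrow> (('d \<Rightarrow> nat) \<Rightarrow> real^'d \<Rightarrow> real) \<Rightarrow> bool" where
  "Lip_derivs r c0 f D \<longleftrightarrow> partial_derivs (ipart r) f D \<and>
     (\<forall>\<alpha>. mi_order \<alpha> = ipart r \<longrightarrow> (\<forall>x\<in>unit_cube. \<forall>x'\<in>unit_cube.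
        \<bar>D \<alpha> x - D \<alpha> x'\<bar> \<le> c0 * norm (x - x') powr fpart r))"

definition taylor_poly :: "nat \<Rightarrow> (('d::finite \<Rightarrow> nat) \<Rightarrow> real^'d \<Rightarrow> real)
     \<Rightarrow> real^'d \<Rightarrow> real^'d \<Rightarrow> real" where
  "taylor_poly u D x0 x = (\<Sum>\<alpha>\<in>{\<alpha>. mi_order \<alpha> \<le> u}.
      D \<alpha> x0 / (\<Prod>i\<in>UNIV. fact (\<alpha> i)) * (\<Prod>i\<in>UNIV. (x$i - x0$i) ^ \<alpha> i))"

definition relu :: "real \<Rightarrow> real" where
  "relu t = max t 0"

definition trap :: "real \<Rightarrow> real \<Rightarrow> real \<Rightarrow> real \<Rightarrow> real" where
  "trap \<tau> a b t = (relu (t - a + \<tau>) - relu (t - a) - relu (t - b) + relu (t - b - \<tau>)) / \<tau>"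

definition Nabt :: "real \<Rightarrow> real \<Rightarrow> real \<Rightarrow> real^'d::finite \<Rightarrow> real" where
  "Nabt a b \<tau> x = relu ((\<Sum>j\<in>UNIV. trap \<tau> a b (x$j)) - (real CARD('d) - 1))"

definition N1 :: "nat \<Rightarrow> real^'d::finite \<Rightarrow> real \<Rightarrow> real^'d \<Rightarrow> real" where
  "N1 Ns \<xi> \<tau> x = Nabt (-1 / (2 * real Ns)) (1 / (2 * real Ns)) \<tau> (x - \<xi>)"

definition N2 :: "nat \<Rightarrow> (('d::finite \<Rightarrow> nat) \<Rightarrow> real^'d \<Rightarrow> real) \<Rightarrow> nat \<Rightarrow> real
     \<Rightarrow> real^'d \<Rightarrow> real" where
  "N2 u D Ns \<tau> x = (\<Sum>k\<in>cube_idx Ns.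
      taylor_poly u D (center Ns k) x * N1 Ns (center Ns k) \<tau> x)"

definition Lp_norm_cube :: "real \<Rightarrow> (real^'d::finite \<Rightarrow> real) \<Rightarrow> real" where
  "Lp_norm_cube p g = (LINT x:unit_cube|lborel. \<bar>g x\<bar> powr p) powr (1 / p)"

end

theory Submission
  imports Defs
begin


lemma axis_comp: "(y + t *\<^sub>R axis j (1::real)) $ i = y $ i + (if i = j then t else 0)"
  by (simp add: axis_def)

lemma finite_mi: "finite {\<beta>::'d::finite\<Rightarrow>nat. mi_order \<beta> \<le> m}"
proof -
  have "{\<beta>::'d\<Rightarrow>nat. mi_order \<beta> \<le> m} \<subseteq> PiE UNIV (\<lambda>_. {..m})"
  proof
    fix \<beta> :: "'d\<Rightarrow>nat" assume "\<beta> \<in> {\<beta>. mi_order \<beta> \<le> m}"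
    then have "\<beta> i \<le> m" for i
      unfolding mi_order_def using member_le_sum[of i UNIV \<beta>] by auto
    then show "\<beta> \<in> PiE UNIV (\<lambda>_. {..m})" by auto
  qed
  moreover have "finite (PiE (UNIV::'d set) (\<lambda>_. {..m}))" by (rule finite_PiE) auto
  ultimately show ?thesis by (rule finite_subset)
qed

lemma mi_order_upd: "mi_order (\<alpha>(j := Suc (\<alpha> j))) = Suc (mi_order \<alpha>)"
proof -
  have "mi_order (\<alpha>(j := Suc (\<alpha> j))) = Suc (\<alpha> j) + (\<Sum>i\<in>UNIV-{j}. \<alpha> i)"
    unfolding mi_order_def by (subst sum.remove[of _ j]) auto
  also have "\<dots> = Suc (mi_order \<alpha>)"
    unfolding mi_order_def by (subst (2) sum.remove[of _ j]) auto
  finally show ?thesis .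
qed

lemma prod_upd_j:
  fixes g :: "'d::finite \<Rightarrow> real"
  shows "(\<Prod>i\<in>UNIV. g i) = g j * (\<Prod>i\<in>UNIV-{j}. g i)"
  by (subst prod.remove[of _ j]) auto

lemma PD:
  fixes y \<xi> :: "real^'d::finite" and \<beta> :: "'d \<Rightarrow> nat"
  shows "((\<lambda>t. \<Prod>i\<in>UNIV. ((y + t *\<^sub>R axis j 1)$i - \<xi>$i) ^ \<beta> i) has_real_derivative
     real (\<beta> j) * (\<Prod>i\<in>UNIV. (y$i - \<xi>$i) ^ (\<beta>(j := \<beta> j - 1)) i)) (at 0)"
proof -
  define C where "C = (\<Prod>i\<in>UNIV-{j}. (y$i - \<xi>$i) ^ \<beta> i)"
  have f: "(\<lambda>t. \<Prod>i\<in>UNIV. ((y + t *\<^sub>R axis j 1)$i - \<xi>$i) ^ \<beta> i)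
      = (\<lambda>t. (y$j + t - \<xi>$j) ^ \<beta> j * C)"
  proof
    fix t
    show "(\<Prod>i\<in>UNIV. ((y + t *\<^sub>R axis j 1)$i - \<xi>$i) ^ \<beta> i) = (y$j + t - \<xi>$j) ^ \<beta> j * C"
      unfolding C_def
      by (subst prod_upd_j[of _ j]) (auto simp: axis_def intro!: prod.cong)
  qed
  have r: "(\<Prod>i\<in>UNIV. (y$i - \<xi>$i) ^ (\<beta>(j := \<beta> j - 1)) i) = (y$j - \<xi>$j) ^ (\<beta> j - 1) * C"
    unfolding C_def by (subst prod_upd_j[of _ j]) (auto intro!: prod.cong)
  have "((\<lambda>t. (y$j + t - \<xi>$j) ^ \<beta> j * C) has_real_derivative
      real (\<beta> j) * (y$j + 0 - \<xi>$j) ^ (\<beta> j - 1) * 1 * C) (at 0)"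
    by (intro derivative_eq_intros) auto
  then show ?thesis unfolding f r by (simp add: mult.assoc)
qed

definition TP :: "nat \<Rightarrow> (('d::finite \<Rightarrow> nat) \<Rightarrow> real^'d \<Rightarrow> real) \<Rightarrow> ('d \<Rightarrow> nat) \<Rightarrow> real^'d \<Rightarrow> real^'d \<Rightarrow> real" where
  "TP m D \<alpha> \<xi> x = (\<Sum>\<beta>\<in>{\<beta>. mi_order \<beta> \<le> m}.
      D (\<lambda>i. \<alpha> i + \<beta> i) \<xi> / (\<Prod>i\<in>UNIV. fact (\<beta> i)) * (\<Prod>i\<in>UNIV. (x$i - \<xi>$i) ^ \<beta> i))"

lemma TPD:
  fixes y \<xi> :: "real^'d::finite"
  shows "((\<lambda>t. TP (Suc m) D \<alpha> \<xi> (y + t *\<^sub>R axis j 1)) has_real_derivative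
     TP m D (\<alpha>(j := Suc (\<alpha> j))) \<xi> y) (at 0)"
proof -
  let ?B = "{\<beta>::'d\<Rightarrow>nat. mi_order \<beta> \<le> Suc m}"
  let ?G = "{\<gamma>::'d\<Rightarrow>nat. mi_order \<gamma> \<le> m}"
  define c where "c \<beta> = D (\<lambda>i. \<alpha> i + \<beta> i) \<xi> / (\<Prod>i\<in>UNIV. fact (\<beta> i))" for \<beta>
  define g where "g \<beta> = c \<beta> * (real (\<beta> j) * (\<Prod>i\<in>UNIV. (y$i - \<xi>$i) ^ (\<beta>(j := \<beta> j - 1)) i))" for \<beta>
  have d1: "((\<lambda>t. TP (Suc m) D \<alpha> \<xi> (y + t *\<^sub>R axis j 1)) has_real_derivative (\<Sum>\<beta>\<in>?B. g \<beta>)) (at 0)"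
    unfolding TP_def g_def c_def
    by (intro DERIV_sum DERIV_cmult PD)
  have "(\<Sum>\<beta>\<in>?B. g \<beta>) = (\<Sum>\<beta>\<in>?B \<inter> {\<beta>. \<beta> j \<noteq> 0}. g \<beta>)"
    by (rule sum.mono_neutral_cong_right) (auto simp: finite_mi g_def)
  also have "?B \<inter> {\<beta>. \<beta> j \<noteq> 0} = (\<lambda>\<gamma>. \<gamma>(j := Suc (\<gamma> j))) ` ?G"
  proof (rule set_eqI, rule iffI)
    fix \<beta> assume "\<beta> \<in> ?B \<inter> {\<beta>. \<beta> j \<noteq> 0}"
    then have b: "mi_order \<beta> \<le> Suc m" "\<beta> j \<noteq> 0" by auto
    define \<gamma> where "\<gamma> = \<beta>(j := \<beta> j - 1)"
    have e: "\<beta> = \<gamma>(j := Suc (\<gamma> j))" using b by (auto simp: \<gamma>_def)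
    have "mi_order \<gamma> \<le> m" using b mi_order_upd[of \<gamma> j] e by simp
    then show "\<beta> \<in> (\<lambda>\<gamma>. \<gamma>(j := Suc (\<gamma> j))) ` ?G" using e by auto
  next
    fix \<beta> assume "\<beta> \<in> (\<lambda>\<gamma>. \<gamma>(j := Suc (\<gamma> j))) ` ?G"
    then show "\<beta> \<in> ?B \<inter> {\<beta>. \<beta> j \<noteq> 0}" by (auto simp: mi_order_upd)
  qed
  also have "(\<Sum>\<beta>\<in>(\<lambda>\<gamma>. \<gamma>(j := Suc (\<gamma> j))) ` ?G. g \<beta>) = (\<Sum>\<gamma>\<in>?G. g (\<gamma>(j := Suc (\<gamma> j))))"
  proof -
    have "inj_on (\<lambda>\<gamma>. \<gamma>(j := Suc (\<gamma> j))) ?G"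
    proof (rule inj_onI)
      fix a b :: "'d \<Rightarrow> nat" assume "a(j := Suc (a j)) = b(j := Suc (b j))"
      then have "a i = b i" for i by (metis fun_upd_apply nat.inject)
      then show "a = b" by auto
    qed
    from sum.reindex[OF this, of g] show ?thesis by (simp add: o_def)
  qed
  also have "\<dots> = TP m D (\<alpha>(j := Suc (\<alpha> j))) \<xi> y"
    unfolding TP_def
  proof (rule sum.cong[OF refl])
    fix \<gamma> :: "'d \<Rightarrow> nat"
    have p1: "(\<Prod>i\<in>UNIV. fact ((\<gamma>(j := Suc (\<gamma> j))) i) :: real) = real (Suc (\<gamma> j)) * (\<Prod>i\<in>UNIV. fact (\<gamma> i))"
      using prod_upd_j[of "\<lambda>i. fact ((\<gamma>(j := Suc (\<gamma> j))) i)" j] prod_upd_j[of "\<lambda>i. fact (\<gamma> i)" j]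
      by (simp add: fact_Suc del: of_nat_Suc)
    have p2: "(\<lambda>i. \<alpha> i + (\<gamma>(j := Suc (\<gamma> j))) i) = (\<lambda>i. (\<alpha>(j := Suc (\<alpha> j))) i + \<gamma> i)" by auto
    have p3: "(\<gamma>(j := Suc (\<gamma> j)))(j := (\<gamma>(j := Suc (\<gamma> j))) j - 1) = \<gamma>" by auto
    have pos: "(\<Prod>i\<in>UNIV. fact (\<gamma> i) :: real) \<noteq> 0" by (simp add: prod_zero_iff)
    show "g (\<gamma>(j := Suc (\<gamma> j))) = D (\<lambda>i. (\<alpha>(j := Suc (\<alpha> j))) i + \<gamma> i) \<xi> / (\<Prod>i\<in>UNIV. fact (\<gamma> i)) *
          (\<Prod>i\<in>UNIV. (y $ i - \<xi> $ i) ^ \<gamma> i)"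
      unfolding g_def c_def p1 p2 p3 using pos
      by (simp add: field_simps del: of_nat_Suc)
  qed
  finally show ?thesis using d1 by simp
qed


lemma norm_mono_comp:
  fixes a b :: "real^'d::finite"
  assumes "\<And>i. \<bar>a$i\<bar> \<le> \<bar>b$i\<bar>"
  shows "norm a \<le> norm b"
  unfolding norm_vec_def by (rule L2_set_mono) (use assms in auto)

lemma mi_order_0_iff: "mi_order (\<beta>::'d::finite\<Rightarrow>nat) = 0 \<longleftrightarrow> \<beta> = (\<lambda>_. 0)"
  unfolding mi_order_def by (auto simp: fun_eq_iff)

lemma TP_at_center_term:
  fixes \<beta> :: "'d::finite \<Rightarrow> nat" and \<xi> :: "real^'d"
  shows "D (\<lambda>i. \<alpha> i + \<beta> i) \<xi> / (\<Prod>i\<in>UNIV. fact (\<beta> i)) * (\<Prod>i\<in>UNIV. (\<xi> $ i - \<xi> $ i) ^ \<beta> i) =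
        (if \<beta> = (\<lambda>_. 0) then D \<alpha> \<xi> else 0)"
proof (cases "\<beta> = (\<lambda>_. 0)")
  case True then show ?thesis by simp
next
  case False
  then obtain i where "\<beta> i \<noteq> 0" by auto
  then have "(\<Prod>i\<in>UNIV. (\<xi> $ i - \<xi> $ i) ^ \<beta> i) = (0::real)"
    by (auto simp: prod_zero_iff)
  then show ?thesis using False by simp
qed

lemma TP_at_center:
  fixes D :: "('d::finite \<Rightarrow> nat) \<Rightarrow> real^'d \<Rightarrow> real"
  shows "TP m D \<alpha> \<xi> \<xi> = D \<alpha> \<xi>"
proof -
  have "TP m D \<alpha> \<xi> \<xi> = (\<Sum>\<beta>::'d\<Rightarrow>nat\<in>{\<beta>. mi_order \<beta> \<le> m}. if \<beta> = (\<lambda>_. 0) then D \<alpha> \<xi> else 0)"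
    unfolding TP_def TP_at_center_term ..
  also have "\<dots> = D \<alpha> \<xi>" using finite_mi[of m] by (subst sum.delta) (auto simp: mi_order_def)
  finally show ?thesis .
qed

lemma TP_0:
  fixes D :: "('d::finite \<Rightarrow> nat) \<Rightarrow> real^'d \<Rightarrow> real"
  shows "TP 0 D \<alpha> \<xi> x = D \<alpha> \<xi>"
proof -
  have "{\<beta>::'d\<Rightarrow>nat. mi_order \<beta> \<le> 0} = {\<lambda>_. 0}" using mi_order_0_iff by auto
  then show ?thesis unfolding TP_def by simp
qed

lemma deriv_shift_line:
  fixes G :: "real^'d::finite \<Rightarrow> real"
  assumes "\<forall>w\<in>unit_cube. ((\<lambda>t. G (w + t *\<^sub>R axis j 1)) has_real_derivative G' w)
              (at 0 within {t. w + t *\<^sub>R axis j 1 \<in> unit_cube})"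
    and "z + t0 *\<^sub>R axis j 1 \<in> unit_cube"
  shows "((\<lambda>t. G (z + t *\<^sub>R axis j 1)) has_real_derivative G' (z + t0 *\<^sub>R axis j 1))
      (at t0 within {t. z + t *\<^sub>R axis j 1 \<in> unit_cube})"
proof -
  define w where "w = z + t0 *\<^sub>R axis j 1"
  define S where "S = {t. z + t *\<^sub>R axis j 1 \<in> unit_cube}"
  have eq: "\<And>t. w + (t - t0) *\<^sub>R axis j 1 = z + t *\<^sub>R axis j 1"
    unfolding w_def by (simp add: algebra_simps)
  have img: "(\<lambda>t. t - t0) ` S = {s. w + s *\<^sub>R axis j 1 \<in> unit_cube}"
  proof (rule set_eqI, rule iffI)
    fix s assume "s \<in> (\<lambda>t. t - t0) ` S" then show "s \<in> {s. w + s *\<^sub>R axis j 1 \<in> unit_cube}"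
      using eq unfolding S_def by auto
  next
    fix s assume "s \<in> {s. w + s *\<^sub>R axis j 1 \<in> unit_cube}"
    then have "s + t0 \<in> S" using eq[of "s + t0"] unfolding S_def by simp
    then show "s \<in> (\<lambda>t. t - t0) ` S" by (intro image_eqI[of _ _ "s + t0"]) auto
  qed
  have d1: "((\<lambda>s. G (w + s *\<^sub>R axis j 1)) has_real_derivative G' w) (at ((\<lambda>t. t - t0) t0) within (\<lambda>t. t - t0) ` S)"
    using assms(1) assms(2) unfolding img w_def by simp
  have d2: "((\<lambda>t. t - t0) has_real_derivative 1) (at t0 within S)"
    by (intro derivative_eq_intros) auto
  from DERIV_image_chain[OF d1 d2] have
    "((\<lambda>s. G (w + s *\<^sub>R axis j 1)) \<circ> (\<lambda>t. t - t0) has_real_derivative G' w) (at t0 within S)" by simp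
  moreover have "(\<lambda>s. G (w + s *\<^sub>R axis j 1)) \<circ> (\<lambda>t. t - t0) = (\<lambda>t. G (z + t *\<^sub>R axis j 1))"
    using eq by (auto simp: o_def)
  ultimately show ?thesis unfolding S_def w_def by simp
qed


lemma taylor_bound:
  fixes f :: "real^'d::finite \<Rightarrow> real" and D :: "('d \<Rightarrow> nat) \<Rightarrow> real^'d \<Rightarrow> real"
  assumes pd: "partial_derivs u f D"
    and hol: "\<And>\<alpha> x x'. mi_order \<alpha> = u \<Longrightarrow> x \<in> unit_cube \<Longrightarrow> x' \<in> unit_cube \<Longrightarrow>
                 \<bar>D \<alpha> x - D \<alpha> x'\<bar> \<le> c0 * norm (x - x') powr v"
    and v: "0 < v" and c0: "0 \<le> c0"
  shows "mi_order \<alpha> + m = u \<Longrightarrow> \<xi> \<in> unit_cube \<Longrightarrow> x \<in> unit_cube \<Longrightarrow>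
     \<bar>D \<alpha> x - TP m D \<alpha> \<xi> x\<bar> \<le> real CARD('d) ^ m * c0 * norm (x - \<xi>) powr (real m + v)"
proof (induction m arbitrary: \<alpha> x)
  case 0
  then show ?case using hol[of \<alpha> x \<xi>] by (simp add: TP_0)
next
  case (Suc m)
  let ?d = "real CARD('d)"
  define E where "E y = D \<alpha> y - TP (Suc m) D \<alpha> \<xi> y" for y
  have ord: "mi_order \<alpha> < u" using Suc.prems by simp
  have dE: "((\<lambda>t. E (y + t *\<^sub>R axis j 1)) has_real_derivative
       (D (\<alpha>(j := Suc (\<alpha> j))) y - TP m D (\<alpha>(j := Suc (\<alpha> j))) \<xi> y))
       (at 0 within {t. y + t *\<^sub>R axis j 1 \<in> unit_cube})" if y: "y \<in> unit_cube" for j y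
  proof -
    have a: "((\<lambda>t. D \<alpha> (y + t *\<^sub>R axis j 1)) has_real_derivative D (\<alpha>(j := Suc (\<alpha> j))) y)
       (at 0 within {t. y + t *\<^sub>R axis j 1 \<in> unit_cube})"
      using pd ord y unfolding partial_derivs_def by blast
    have b: "((\<lambda>t. TP (Suc m) D \<alpha> \<xi> (y + t *\<^sub>R axis j 1)) has_real_derivative
       TP m D (\<alpha>(j := Suc (\<alpha> j))) \<xi> y) (at 0 within {t. y + t *\<^sub>R axis j 1 \<in> unit_cube})"
      by (rule has_field_derivative_at_within[OF TPD])
    show ?thesis unfolding E_def by (rule DERIV_diff[OF a b])
  qed
  have IH': "\<bar>D (\<alpha>(j := Suc (\<alpha> j))) w - TP m D (\<alpha>(j := Suc (\<alpha> j))) \<xi> w\<bar>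
      \<le> ?d ^ m * c0 * norm (w - \<xi>) powr (real m + v)" if "w \<in> unit_cube" for j w
  proof -
    have "mi_order (\<alpha>(j := Suc (\<alpha> j))) + m = u" using mi_order_upd[of \<alpha> j] Suc.prems by simp
    from Suc.IH[OF this Suc.prems(2) that] show ?thesis .
  qed
  define h where "h = norm (x - \<xi>)"
  define B where "B = ?d ^ m * c0 * h powr (real m + v)"
  have B0: "0 \<le> B" unfolding B_def using c0 by simp
  have h0: "0 \<le> h" unfolding h_def by simp
  define z where "z J = (\<chi> i. if i \<in> J then x$i else \<xi>$i)" for J
  have xc: "\<forall>i. 0 \<le> x$i \<and> x$i \<le> 1" and \<xi>c: "\<forall>i. 0 \<le> \<xi>$i \<and> \<xi>$i \<le> 1"
    using Suc.prems unfolding unit_cube_def by auto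
  have main: "\<bar>E (z J)\<bar> \<le> real (card J) * (B * h)" for J
  proof -
    have "finite J" by simp
    then show ?thesis
    proof (induction J rule: finite_induct)
      case empty
      have "z {} = \<xi>" unfolding z_def by (simp add: vec_eq_iff)
      then show ?case unfolding E_def by (simp add: TP_at_center)
    next
      case (insert j J)
      define \<delta> where "\<delta> = x$j - \<xi>$j"
      define S where "S = closed_segment 0 \<delta>"
      define p where "p t = z J + t *\<^sub>R axis j 1" for t
      have Smem: "t \<in> S \<longleftrightarrow> (0 \<le> t \<and> t \<le> \<delta>) \<or> (\<delta> \<le> t \<and> t \<le> 0)" for t
        unfolding S_def closed_segment_eq_real_ivl by auto
      have pcomp: "p t $ i = (if i = j then \<xi>$j + t else z J $ i)" for t i
        using insert.hyps unfolding p_def z_def by (auto simp: axis_def)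
      have zJc: "z J $ i = x$i \<or> z J $ i = \<xi>$i" for i unfolding z_def by auto
      have pc: "p t \<in> unit_cube" if "t \<in> S" for t
      proof -
        have "0 \<le> p t $ i \<and> p t $ i \<le> 1" for i
        proof (cases "i = j")
          case True
          then show ?thesis using that xc[rule_format, of j] \<xi>c[rule_format, of j]
            unfolding Smem pcomp \<delta>_def by auto
        next
          case False
          then show ?thesis using xc[rule_format, of i] \<xi>c[rule_format, of i] zJc[of i]
            unfolding pcomp by auto
        qed
        then show ?thesis unfolding unit_cube_def by auto
      qed
      have pn: "norm (p t - \<xi>) \<le> h" if "t \<in> S" for t
        unfolding h_def
      proof (rule norm_mono_comp)
        fix i show "\<bar>(p t - \<xi>) $ i\<bar> \<le> \<bar>(x - \<xi>) $ i\<bar>"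
          using that zJc[of i] unfolding Smem \<delta>_def by (cases "i = j") (auto simp: pcomp)
      qed
      have dG: "((\<lambda>t. E (p t)) has_real_derivative
           (D (\<alpha>(j := Suc (\<alpha> j))) (p t) - TP m D (\<alpha>(j := Suc (\<alpha> j))) \<xi> (p t))) (at t within S)"
        if "t \<in> S" for t
      proof -
        have "((\<lambda>t. E (z J + t *\<^sub>R axis j 1)) has_real_derivative
           (D (\<alpha>(j := Suc (\<alpha> j))) (p t) - TP m D (\<alpha>(j := Suc (\<alpha> j))) \<xi> (p t)))
           (at t within {t. z J + t *\<^sub>R axis j 1 \<in> unit_cube})"
          unfolding p_def
          by (rule deriv_shift_line[where G'="\<lambda>y. D (\<alpha>(j := Suc (\<alpha> j))) y - TP m D (\<alpha>(j := Suc (\<alpha> j))) \<xi> y"])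
             (use dE pc[OF that] in \<open>auto simp: p_def\<close>)
        then have "((\<lambda>t. E (z J + t *\<^sub>R axis j 1)) has_real_derivative
           (D (\<alpha>(j := Suc (\<alpha> j))) (p t) - TP m D (\<alpha>(j := Suc (\<alpha> j))) \<xi> (p t))) (at t within S)"
          by (rule has_field_derivative_subset) (use pc in \<open>auto simp: p_def\<close>)
        then show ?thesis unfolding p_def .
      qed
      have bG: "norm (D (\<alpha>(j := Suc (\<alpha> j))) (p t) - TP m D (\<alpha>(j := Suc (\<alpha> j))) \<xi> (p t)) \<le> B"
        if "t \<in> S" for t
      proof -
        have "norm (p t - \<xi>) powr (real m + v) \<le> h powr (real m + v)"
          using pn[OF that] v by (intro powr_mono2) auto
        then have "?d ^ m * c0 * norm (p t - \<xi>) powr (real m + v) \<le> B"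
          unfolding B_def using c0 by (intro mult_left_mono) auto
        then show ?thesis using IH'[OF pc[OF that], of j] by simp
      qed
      have "norm (E (p \<delta>) - E (p 0)) \<le> B * norm (\<delta> - 0)"
        by (rule field_differentiable_bound[of S, OF _ dG bG]) (auto simp: S_def)
      moreover have "p 0 = z J" unfolding p_def by simp
      moreover have "p \<delta> = z (insert j J)"
        unfolding vec_eq_iff pcomp using insert.hyps by (auto simp: z_def \<delta>_def)
      moreover have "\<bar>\<delta>\<bar> \<le> h" unfolding \<delta>_def h_def
        using component_le_norm_cart[of "x - \<xi>" j] by simp
      ultimately have "\<bar>E (z (insert j J)) - E (z J)\<bar> \<le> B * h"
        using B0 by (smt (verit) mult_left_mono real_norm_def)
      then show ?case using insert.IH insert.hyps by (simp add: algebra_simps)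
    qed
  qed
  have "z UNIV = x" unfolding z_def by (simp add: vec_eq_iff)
  then have "\<bar>E x\<bar> \<le> ?d * (B * h)" using main[of UNIV] by simp
  also have "?d * (B * h) = ?d ^ Suc m * c0 * h powr (real (Suc m) + v)"
  proof (cases "h = 0")
    case True then show ?thesis unfolding B_def by simp
  next
    case False
    then have "h powr (real (Suc m) + v) = h powr (real m + v) * h"
      using h0 by (simp add: powr_add algebra_simps)
    then show ?thesis unfolding B_def by simp
  qed
  finally show ?case unfolding E_def h_def .
qed



lemma ipart_fpart:
  assumes "r > 0"
  shows "0 < fpart r" "fpart r \<le> 1" "real (ipart r) + fpart r = r"
proof -
  have "0 < \<lceil>r\<rceil>" using assms by simp
  then have c: "1 \<le> \<lceil>r\<rceil>" by linarith
  have e: "real (ipart r) = real_of_int \<lceil>r\<rceil> - 1" unfolding ipart_def using c by simp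
  show "0 < fpart r" unfolding fpart_def e using ceiling_correct[of r] by linarith
  show "fpart r \<le> 1" unfolding fpart_def e using ceiling_correct[of r] by linarith
  show "real (ipart r) + fpart r = r" unfolding fpart_def by simp
qed

lemma taylor_main:
  fixes f :: "real^'d::finite \<Rightarrow> real"
  assumes L: "Lip_derivs r c0 f D" and r: "r > 0" and c0: "c0 > 0"
    and \<xi>: "\<xi> \<in> unit_cube" and x: "x \<in> unit_cube"
  shows "\<bar>f x - taylor_poly (ipart r) D \<xi> x\<bar> \<le> real CARD('d) ^ ipart r * c0 * norm (x - \<xi>) powr r"
proof -
  have pd: "partial_derivs (ipart r) f D" using L unfolding Lip_derivs_def by auto
  have hol: "\<And>\<alpha> x x'. mi_order \<alpha> = ipart r \<Longrightarrow> x \<in> unit_cube \<Longrightarrow> x' \<in> unit_cube \<Longrightarrow>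
                 \<bar>D \<alpha> x - D \<alpha> x'\<bar> \<le> c0 * norm (x - x') powr fpart r"
    using L unfolding Lip_derivs_def by auto
  have "mi_order (\<lambda>_::'d. 0::nat) + ipart r = ipart r" by (simp add: mi_order_def)
  from taylor_bound[OF pd hol ipart_fpart(1)[OF r] _ this \<xi> x] c0
  have "\<bar>D (\<lambda>_. 0) x - TP (ipart r) D (\<lambda>_. 0) \<xi> x\<bar>
     \<le> real CARD('d) ^ ipart r * c0 * norm (x - \<xi>) powr (real (ipart r) + fpart r)" by simp
  moreover have "D (\<lambda>_. 0) x = f x" using pd x unfolding partial_derivs_def by auto
  moreover have "TP (ipart r) D (\<lambda>_. 0) \<xi> x = taylor_poly (ipart r) D \<xi> x"
    unfolding TP_def taylor_poly_def by simp
  ultimately show ?thesis using ipart_fpart(3)[OF r] by simp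
qed

lemma derivs_vanish:
  fixes f :: "real^'d::finite \<Rightarrow> real"
  assumes pd: "partial_derivs u f D" and U: "open U" "U \<subseteq> unit_cube" and f0: "\<forall>y\<in>U. f y = 0"
  shows "mi_order \<alpha> \<le> u \<Longrightarrow> y \<in> U \<Longrightarrow> D \<alpha> y = 0"
proof -
  have "\<forall>\<alpha>. mi_order \<alpha> = n \<longrightarrow> n \<le> u \<longrightarrow> (\<forall>y\<in>U. D \<alpha> y = 0)" for n
  proof (induction n)
    case 0
    show ?case
    proof (intro allI impI ballI)
      fix \<alpha> :: "'d \<Rightarrow> nat" and y assume "mi_order \<alpha> = 0" "y \<in> U"
      then have "\<alpha> = (\<lambda>_. 0)" using mi_order_0_iff by auto
      then show "D \<alpha> y = 0" using pd \<open>y \<in> U\<close> U f0 unfolding partial_derivs_def by auto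
    qed
  next
    case (Suc n)
    show ?case
    proof (intro allI impI ballI)
      fix \<alpha> :: "'d \<Rightarrow> nat" and y assume o: "mi_order \<alpha> = Suc n" "Suc n \<le> u" and y: "y \<in> U"
      then obtain j where j: "\<alpha> j \<noteq> 0" using mi_order_0_iff[of \<alpha>] by auto
      define \<alpha>' where "\<alpha>' = \<alpha>(j := \<alpha> j - 1)"
      have ae: "\<alpha> = \<alpha>'(j := Suc (\<alpha>' j))" using j unfolding \<alpha>'_def by auto
      have o': "mi_order \<alpha>' = n" using o mi_order_upd[of \<alpha>' j] ae by simp
      have z: "\<forall>y\<in>U. D \<alpha>' y = 0" using Suc.IH o o' by auto
      have yc: "y \<in> unit_cube" using y U by auto
      have d: "((\<lambda>t. D \<alpha>' (y + t *\<^sub>R axis j 1)) has_real_derivative D \<alpha> y)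
          (at 0 within {t. y + t *\<^sub>R axis j 1 \<in> unit_cube})"
        using pd o o' yc ae unfolding partial_derivs_def by (metis Suc_le_lessD)
      obtain e where e: "e > 0" "ball y e \<subseteq> U" using U(1) y open_contains_ball by blast
      have inb: "y + t *\<^sub>R axis j 1 \<in> U" if "t \<in> ball 0 e" for t
        using that e by (intro subsetD[OF e(2)]) (auto simp: dist_norm)
      have "ball 0 e \<subseteq> {t. y + t *\<^sub>R axis j 1 \<in> unit_cube}" using inb U by auto
      from has_field_derivative_subset[OF d this]
      have X: "((\<lambda>t. D \<alpha>' (y + t *\<^sub>R axis j 1)) has_real_derivative D \<alpha> y) (at 0 within ball 0 e)" .
      have "at (0::real) within ball 0 e = at 0" by (rule at_within_open) (use e in auto)
      with X have "((\<lambda>t. D \<alpha>' (y + t *\<^sub>R axis j 1)) has_real_derivative D \<alpha> y) (at 0)" by simp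
      then have "((\<lambda>t. 0) has_real_derivative D \<alpha> y) (at 0)"
        by (rule has_field_derivative_transform_within_open[of _ _ _ "ball 0 e"]) (use e inb z in auto)
      then show "D \<alpha> y = 0" using DERIV_const DERIV_unique by blast
    qed
  qed
  then show "mi_order \<alpha> \<le> u \<Longrightarrow> y \<in> U \<Longrightarrow> D \<alpha> y = 0" by blast
qed

lemma trap_facts:
  assumes "a \<le> b" "\<tau> > 0"
  shows "0 \<le> trap \<tau> a b t" "trap \<tau> a b t \<le> 1"
    and "a \<le> t \<Longrightarrow> t \<le> b \<Longrightarrow> trap \<tau> a b t = 1"
    and "t \<le> a - \<tau> \<or> b + \<tau> \<le> t \<Longrightarrow> trap \<tau> a b t = 0"
  using assms unfolding trap_def relu_def
  by (auto simp: max_def field_simps)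



lemma card_pos_d: "0 < CARD('d::finite)" by simp

lemma N1_facts:
  fixes x \<xi> :: "real^'d::finite"
  assumes Ns: "Ns > 0" and \<tau>: "\<tau> > 0"
  shows "0 \<le> N1 Ns \<xi> \<tau> x" "N1 Ns \<xi> \<tau> x \<le> 1"
    and "(\<forall>i. \<bar>x$i - \<xi>$i\<bar> \<le> 1/(2*real Ns)) \<Longrightarrow> N1 Ns \<xi> \<tau> x = 1"
    and "(\<exists>i. 1/(2*real Ns) + \<tau> \<le> \<bar>x$i - \<xi>$i\<bar>) \<Longrightarrow> N1 Ns \<xi> \<tau> x = 0"
proof -
  define a where "a = -1/(2*real Ns)"
  define b where "b = 1/(2*real Ns)"
  have ab: "a \<le> b" unfolding a_def b_def by simp
  define t where "t j = trap \<tau> a b ((x - \<xi>)$j)" for j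
  have N1e: "N1 Ns \<xi> \<tau> x = relu ((\<Sum>j\<in>UNIV. t j) - (real CARD('d) - 1))"
    unfolding N1_def Nabt_def t_def a_def b_def by simp
  have t01: "0 \<le> t j" "t j \<le> 1" for j unfolding t_def using trap_facts[OF ab \<tau>] by auto
  have sle: "(\<Sum>j\<in>UNIV. t j) \<le> real CARD('d)"
    using sum_bounded_above[of UNIV t 1] t01 by simp
  show "0 \<le> N1 Ns \<xi> \<tau> x" unfolding N1e relu_def by simp
  show "N1 Ns \<xi> \<tau> x \<le> 1" unfolding N1e relu_def using sle by simp
  show "(\<forall>i. \<bar>x$i - \<xi>$i\<bar> \<le> 1/(2*real Ns)) \<Longrightarrow> N1 Ns \<xi> \<tau> x = 1"
  proof -
    assume h: "\<forall>i. \<bar>x$i - \<xi>$i\<bar> \<le> 1/(2*real Ns)"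
    have "t j = 1" for j unfolding t_def
      using h[rule_format, of j] by (intro trap_facts(3)[OF ab \<tau>]) (auto simp: a_def b_def)
    then show ?thesis unfolding N1e relu_def by simp
  qed
  show "(\<exists>i. 1/(2*real Ns) + \<tau> \<le> \<bar>x$i - \<xi>$i\<bar>) \<Longrightarrow> N1 Ns \<xi> \<tau> x = 0"
  proof -
    assume "\<exists>i. 1/(2*real Ns) + \<tau> \<le> \<bar>x$i - \<xi>$i\<bar>"
    then obtain i where i: "1/(2*real Ns) + \<tau> \<le> \<bar>x$i - \<xi>$i\<bar>" by auto
    have ti: "t i = 0" unfolding t_def
      using i by (intro trap_facts(4)[OF ab \<tau>]) (auto simp: a_def b_def)
    have "(\<Sum>j\<in>UNIV. t j) = t i + (\<Sum>j\<in>UNIV-{i}. t j)" by (subst sum.remove[of _ i]) auto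
    also have "\<dots> \<le> 0 + real (card (UNIV - {i})) * 1"
      using ti sum_bounded_above[of "UNIV-{i}" t 1] t01 by simp
    also have "real (card (UNIV - {i})) = real CARD('d) - 1"
      using card_pos_d[where 'd='d] by (simp add: card_Diff_singleton of_nat_diff)
    finally show ?thesis unfolding N1e relu_def by simp
  qed
qed

lemma card_nat_interval:
  fixes lo hi :: real
  assumes "lo \<le> hi" "0 \<le> hi"
  shows "real (card {j::nat. lo \<le> real j \<and> real j \<le> hi}) \<le> hi - lo + 1"
proof -
  have sub: "{j::nat. lo \<le> real j \<and> real j \<le> hi} \<subseteq> {nat \<lceil>lo\<rceil>..nat \<lfloor>hi\<rfloor>}"
  proof
    fix j :: nat assume "j \<in> {j. lo \<le> real j \<and> real j \<le> hi}"
    then have "lo \<le> real j" "real j \<le> hi" by auto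
    then have "\<lceil>lo\<rceil> \<le> int j" "int j \<le> \<lfloor>hi\<rfloor>" by (simp add: ceiling_le_iff, simp add: le_floor_iff)
    then show "j \<in> {nat \<lceil>lo\<rceil>..nat \<lfloor>hi\<rfloor>}" using \<open>lo \<le> real j\<close> \<open>real j \<le> hi\<close> by auto
  qed
  have "card {j::nat. lo \<le> real j \<and> real j \<le> hi} \<le> card {nat \<lceil>lo\<rceil>..nat \<lfloor>hi\<rfloor>}"
    by (rule card_mono[OF _ sub]) simp
  also have "\<dots> = Suc (nat \<lfloor>hi\<rfloor>) - nat \<lceil>lo\<rceil>" by simp
  finally have c: "card {j::nat. lo \<le> real j \<and> real j \<le> hi} \<le> Suc (nat \<lfloor>hi\<rfloor>) - nat \<lceil>lo\<rceil>" .
  have f1: "real (nat \<lfloor>hi\<rfloor>) \<le> hi" using assms(2) by simp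
  have g: "real_of_int z \<le> real (nat z)" for z by (cases "0 \<le> z") auto
  have f2: "lo \<le> real (nat \<lceil>lo\<rceil>)" using g[of "\<lceil>lo\<rceil>"] le_of_int_ceiling[of lo] by linarith
  have "real (Suc (nat \<lfloor>hi\<rfloor>) - nat \<lceil>lo\<rceil>) \<le> hi - lo + 1"
  proof (cases "nat \<lceil>lo\<rceil> \<le> Suc (nat \<lfloor>hi\<rfloor>)")
    case True
    then have "real (Suc (nat \<lfloor>hi\<rfloor>) - nat \<lceil>lo\<rceil>) = real (nat \<lfloor>hi\<rfloor>) + 1 - real (nat \<lceil>lo\<rceil>)"
      by (simp add: of_nat_diff)
    then show ?thesis using f1 f2 by linarith
  next
    case False
    then have "Suc (nat \<lfloor>hi\<rfloor>) - nat \<lceil>lo\<rceil> = 0" by (metis diff_is_0_eq nat_le_linear)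
    then show ?thesis using assms by simp
  qed
  then show ?thesis using c by (meson of_nat_le_iff order_trans)
qed



lemma cube_idx_Pi: "cube_idx N = PiE UNIV (\<lambda>_::'d::finite. {..<N})"
  unfolding cube_idx_def PiE_UNIV_domain Pi_def by auto

lemma finite_cube_idx: "finite (cube_idx N :: ('d::finite \<Rightarrow> nat) set)"
  unfolding cube_idx_Pi by (rule finite_PiE) auto

lemma center_comp: "center N k $ i = (real (k i) + 1/2) / real N"
  unfolding center_def by simp

lemma N1_nz:
  fixes x \<xi> :: "real^'d::finite"
  assumes "Ns > 0" "\<tau> > 0" "N1 Ns \<xi> \<tau> x \<noteq> 0"
  shows "\<bar>x$i - \<xi>$i\<bar> < 1/(2*real Ns) + \<tau>"
  using N1_facts(4)[OF assms(1,2), of x \<xi>] assms(3) by (meson linorder_not_le)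

lemma card_K:
  fixes x :: "real^'d::finite"
  assumes Ns: "Ns > 0" and \<tau>: "0 < \<tau>" "\<tau> \<le> 1/(2*real Ns)"
  shows "card {k \<in> cube_idx Ns. N1 Ns (center Ns k) \<tau> x \<noteq> 0} \<le> 2 ^ CARD('d)"
proof -
  define y where "y i = real Ns * x$i - 1/2" for i
  define T where "T i = {nat \<lfloor>y i\<rfloor>, nat (\<lfloor>y i\<rfloor> + 1)}" for i
  have sub: "{k \<in> cube_idx Ns. N1 Ns (center Ns k) \<tau> x \<noteq> 0} \<subseteq> PiE UNIV T"
  proof
    fix k assume "k \<in> {k \<in> cube_idx Ns. N1 Ns (center Ns k) \<tau> x \<noteq> 0}"
    then have nz: "N1 Ns (center Ns k) \<tau> x \<noteq> 0" by auto
    have "k i \<in> T i" for i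
    proof -
      have a: "\<bar>x$i - (real (k i) + 1/2) / real Ns\<bar> < 1/real Ns"
        using N1_nz[OF Ns \<tau>(1) nz, of i] \<tau>(2) unfolding center_comp by linarith
      have "\<bar>y i - real (k i)\<bar> = real Ns * \<bar>x$i - (real (k i) + 1/2) / real Ns\<bar>"
        unfolding y_def using Ns by (simp add: abs_mult[symmetric] field_simps)
      also have "\<dots> < real Ns * (1 / real Ns)" using a Ns by (intro mult_strict_left_mono) auto
      finally have b: "\<bar>y i - real (k i)\<bar> < 1" using Ns by simp
      have "\<lfloor>y i\<rfloor> \<le> int (k i)"
        using b by (subst floor_le_iff) linarith
      moreover have "int (k i) \<le> \<lfloor>y i\<rfloor> + 1"
        using b floor_correct[of "y i"] by linarith
      ultimately have "int (k i) = \<lfloor>y i\<rfloor> \<or> int (k i) = \<lfloor>y i\<rfloor> + 1" by linarith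
      then show ?thesis unfolding T_def by auto
    qed
    then show "k \<in> PiE UNIV T" unfolding PiE_UNIV_domain by auto
  qed
  have "card {k \<in> cube_idx Ns. N1 Ns (center Ns k) \<tau> x \<noteq> 0} \<le> card (PiE UNIV T)"
    by (rule card_mono[OF _ sub]) (auto simp: T_def intro!: finite_PiE)
  also have "\<dots> = (\<Prod>i\<in>UNIV. card (T i))" by (rule card_PiE) simp
  also have "\<dots> \<le> (\<Prod>i\<in>(UNIV::'d set). 2)"
    by (rule prod_mono) (auto simp: T_def card_insert_if)
  also have "\<dots> = 2 ^ CARD('d)" by simp
  finally show ?thesis .
qed

lemma sum_N1_bound:
  fixes x :: "real^'d::finite"
  assumes Ns: "Ns > 0" and \<tau>: "0 < \<tau>" "\<tau> \<le> 1/(2*real Ns)" and B: "0 \<le> B"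
    and q: "\<And>k. k \<in> cube_idx Ns \<Longrightarrow> N1 Ns (center Ns k) \<tau> x \<noteq> 0 \<Longrightarrow> \<bar>q k\<bar> \<le> B"
  shows "\<bar>\<Sum>k\<in>cube_idx Ns. N1 Ns (center Ns k) \<tau> x * q k\<bar> \<le> 2 ^ CARD('d) * B"
proof -
  let ?K = "{k \<in> cube_idx Ns. N1 Ns (center Ns k) \<tau> x \<noteq> 0}"
  have "(\<Sum>k\<in>cube_idx Ns. N1 Ns (center Ns k) \<tau> x * q k) = (\<Sum>k\<in>?K. N1 Ns (center Ns k) \<tau> x * q k)"
    by (rule sum.mono_neutral_right) (auto simp: finite_cube_idx)
  also have "\<bar>\<dots>\<bar> \<le> (\<Sum>k\<in>?K. \<bar>N1 Ns (center Ns k) \<tau> x * q k\<bar>)" by (rule sum_abs)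
  also have "\<dots> \<le> (\<Sum>k\<in>?K. B)"
  proof (rule sum_mono)
    fix k assume k: "k \<in> ?K"
    have "0 \<le> N1 Ns (center Ns k) \<tau> x" "N1 Ns (center Ns k) \<tau> x \<le> 1"
      using N1_facts[OF Ns \<tau>(1)] by auto
    then show "\<bar>N1 Ns (center Ns k) \<tau> x * q k\<bar> \<le> B"
      using q[of k] k B by (auto simp: abs_mult intro: mult_le_one[THEN order_trans] ) (smt (verit) mult_left_le_one_le abs_ge_zero)
  qed
  also have "\<dots> = real (card ?K) * B" by simp
  also have "\<dots> \<le> 2 ^ CARD('d) * B"
    using card_K[OF Ns \<tau>, of x] B by (intro mult_right_mono) (simp_all add: of_nat_le_iff[symmetric])
  finally show ?thesis .
qed



lemma sum_N1_one:
  fixes x :: "real^'d::finite"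
  assumes Ns: "Ns > 0" and \<tau>: "\<tau> > 0" and x: "x \<in> unit_cube"
    and far: "\<forall>i. \<forall>j::nat. \<tau> < \<bar>x$i - real j / real Ns\<bar>"
  shows "(\<Sum>k\<in>cube_idx Ns. N1 Ns (center Ns k) \<tau> x) = 1"
proof -
  define k0 where "k0 i = nat \<lfloor>real Ns * x$i\<rfloor>" for i
  define h where "h = 1 / real Ns"
  have h0: "h > 0" using Ns unfolding h_def by simp
  have xc: "0 \<le> x$i" "x$i \<le> 1" for i using x unfolding unit_cube_def by auto
  have lo: "real (k0 i) * h + \<tau> < x$i" and hi: "x$i < (real (k0 i) + 1) * h - \<tau>" for i
  proof -
    have X0: "0 \<le> real Ns * x$i" using xc[of i] by simp
    have k0e: "real (k0 i) = real_of_int \<lfloor>real Ns * x$i\<rfloor>" unfolding k0_def using X0 by simp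
    have f1: "real (k0 i) \<le> real Ns * x$i" "real Ns * x$i < real (k0 i) + 1"
      unfolding k0e by linarith+
    have g1: "real (k0 i) * h \<le> x$i" using f1(1) Ns unfolding h_def by (simp add: field_simps)
    have g2: "x$i < (real (k0 i) + 1) * h" using f1(2) Ns unfolding h_def by (simp add: field_simps)
    have e1: "real (k0 i) / real Ns = real (k0 i) * h" "real (Suc (k0 i)) / real Ns = (real (k0 i) + 1) * h"
      unfolding h_def by simp_all
    have "\<tau> < \<bar>x$i - real (k0 i) * h\<bar>" using far e1 by metis
    then show "real (k0 i) * h + \<tau> < x$i" using g1 by linarith
    have "\<tau> < \<bar>x$i - (real (k0 i) + 1) * h\<bar>" using far e1 by metis
    then show "x$i < (real (k0 i) + 1) * h - \<tau>" using g2 by linarith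
  qed
  have k0in: "k0 \<in> cube_idx Ns"
  proof -
    have "k0 i < Ns" for i
    proof -
      have "real (k0 i) * h < 1" using lo[of i] xc[of i] \<tau> by linarith
      then have "real (k0 i) < real Ns" using Ns unfolding h_def by (simp add: field_simps)
      then show ?thesis by simp
    qed
    then show ?thesis unfolding cube_idx_def by auto
  qed
  have cc: "center Ns k $ i = real (k i) * h + h / 2" for k i
    unfolding center_comp h_def using Ns by (simp add: field_simps)
  have hh: "1 / (2 * real Ns) = h / 2" unfolding h_def by simp
  have hi': "x$i < real (k0 i) * h + h - \<tau>" for i using hi[of i] by (simp add: algebra_simps)
  have "\<forall>i. \<bar>x$i - center Ns k0 $ i\<bar> \<le> 1/(2*real Ns)"
  proof
    fix i show "\<bar>x$i - center Ns k0 $ i\<bar> \<le> 1/(2*real Ns)"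
      unfolding hh cc abs_le_iff using lo[of i] hi'[of i] \<tau> by linarith
  qed
  then have one: "N1 Ns (center Ns k0) \<tau> x = 1" by (rule N1_facts(3)[OF Ns \<tau>])
  have zero: "N1 Ns (center Ns k) \<tau> x = 0" if "k \<noteq> k0" for k
  proof (rule N1_facts(4)[OF Ns \<tau>])
    obtain i where i: "k i \<noteq> k0 i" using \<open>k \<noteq> k0\<close> by auto
    show "\<exists>i. 1 / (2 * real Ns) + \<tau> \<le> \<bar>x $ i - center Ns k $ i\<bar>"
    proof (intro exI[of _ i])
      show "1 / (2 * real Ns) + \<tau> \<le> \<bar>x $ i - center Ns k $ i\<bar>"
      proof (cases "k i > k0 i")
        case True
        then have "real (k0 i) + 1 \<le> real (k i)" by simp
        then have "(real (k0 i) + 1) * h \<le> real (k i) * h" using h0 by (intro mult_right_mono) auto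
        then have "real (k0 i) * h + h \<le> real (k i) * h" by (simp add: algebra_simps)
        then show ?thesis using hi'[of i] unfolding cc hh abs_if by auto
      next
        case False
        then have "real (k i) + 1 \<le> real (k0 i)" using i by simp
        then have "(real (k i) + 1) * h \<le> real (k0 i) * h" using h0 by (intro mult_right_mono) auto
        then have "real (k i) * h + h \<le> real (k0 i) * h" by (simp add: algebra_simps)
        then show ?thesis using lo[of i] unfolding cc hh abs_if by auto
      qed
    qed
  qed
  have "(\<Sum>k\<in>cube_idx Ns. N1 Ns (center Ns k) \<tau> x) = (\<Sum>k\<in>cube_idx Ns. if k = k0 then 1 else 0)"
    by (rule sum.cong) (auto simp: one zero)
  also have "\<dots> = 1" using k0in by (subst sum.delta[OF finite_cube_idx]) simp
  finally show ?thesis .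
qed



lemma Lp_bound:
  fixes g H :: "real^'d::finite \<Rightarrow> real"
  assumes p: "p > 0" and H: "integrable lborel H" "\<And>x. 0 \<le> H x"
    and b: "\<And>x. x \<in> unit_cube \<Longrightarrow> \<bar>g x\<bar> powr p \<le> H x"
  shows "Lp_norm_cube p g \<le> (integral\<^sup>L lborel H) powr (1/p)"
proof -
  have "(LINT x:unit_cube|lborel. \<bar>g x\<bar> powr p) = (\<integral>x. indicator unit_cube x *\<^sub>R \<bar>g x\<bar> powr p \<partial>lborel)"
    by (simp add: set_lebesgue_integral_def)
  also have "\<dots> \<le> integral\<^sup>L lborel H"
  proof (rule integral_mono'[OF H(1)])
    fix x show "indicator unit_cube x *\<^sub>R \<bar>g x\<bar> powr p \<le> H x"
      using b[of x] H(2)[of x] by (cases "x \<in> unit_cube") auto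
  qed (use H in auto)
  finally have le: "(LINT x:unit_cube|lborel. \<bar>g x\<bar> powr p) \<le> integral\<^sup>L lborel H" .
  have nn: "0 \<le> (LINT x:unit_cube|lborel. \<bar>g x\<bar> powr p)"
    by (simp add: set_lebesgue_integral_def)
  show ?thesis unfolding Lp_norm_cube_def
    using le nn p by (intro powr_mono2) auto
qed

lemma box_indicator:
  fixes a b :: "real^'d::finite"
  shows "integrable lborel (indicator (cbox a b) :: real^'d \<Rightarrow> real)"
    and "integral\<^sup>L lborel (indicator (cbox a b) :: real^'d \<Rightarrow> real) = measure lborel (cbox a b)"
  by (rule integrable_real_indicator, simp, rule emeasure_lborel_cbox_finite) simp

lemma content_box_le:
  fixes a b :: "real^'d::finite"
  assumes "\<And>l. a$l \<le> b$l"
  shows "measure lborel (cbox a b) = (\<Prod>l\<in>UNIV. b$l - a$l)"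
proof -
  have "a \<in> cbox a b" using assms by (simp add: mem_box_cart)
  then show ?thesis by (intro content_cbox_cart) auto
qed

lemma fin_bound:
  fixes p X r q A E Z dd T mL mR I :: real
  assumes p: "p \<ge> 1" and X: "X \<ge> 1" and r: "r > 0" and q: "0 < q" "q \<le> 1"
    and A: "0 \<le> A" "A \<le> Z" and E: "0 \<le> E" "E \<le> Z" and dd: "0 \<le> dd" and T: "1 \<le> T"
    and mL: "0 \<le> mL" "mL \<le> 2 * dd * q * (X powr (-r)) powr p"
    and mR: "0 \<le> mR" "mR \<le> T * q"
    and I: "I \<le> 2 powr p * (A powr p * mL + (E * X powr (-r)) powr p * mR)" and I0: "0 \<le> I"
  shows "I powr (1/p) \<le> 2 * Z * (2 * dd + T) * X powr (-r) * q powr (1/p)"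
proof -
  define W where "W = X powr (-r)"
  have W: "0 < W" unfolding W_def using X by simp
  have Z0: "0 \<le> Z" using A by simp
  have "A powr p * mL \<le> Z powr p * (2 * dd * q * W powr p)"
    using A mL p unfolding W_def by (intro mult_mono powr_mono2) auto
  moreover have "(E * W) powr p * mR \<le> (Z * W) powr p * (T * q)"
    using E mR p W by (intro mult_mono powr_mono2 mult_right_mono) auto
  ultimately have "I \<le> 2 powr p * (Z powr p * (2 * dd * q * W powr p) + (Z * W) powr p * (T * q))"
    using I unfolding W_def by (smt (verit) mult_left_mono powr_ge_zero)
  also have "\<dots> = (2 * Z * W) powr p * q * (2 * dd + T)"
    using Z0 W by (simp add: powr_mult algebra_simps)
  also have "\<dots> \<le> (2 * Z * W) powr p * q * (2 * dd + T) powr p"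
  proof -
    have "(2 * dd + T) = (2 * dd + T) powr 1" using dd T by simp
    also have "\<dots> \<le> (2 * dd + T) powr p" using dd T p by (intro powr_mono) auto
    finally show ?thesis using q Z0 W by (intro mult_left_mono) auto
  qed
  also have "\<dots> = (2 * Z * W * (2 * dd + T)) powr p * q"
  proof -
    have "(2 * Z * W * (2 * dd + T)) powr p = 2 powr p * Z powr p * W powr p * (2 * dd + T) powr p"
      using Z0 W dd T by (simp add: powr_mult)
    moreover have "(2 * Z * W) powr p = 2 powr p * Z powr p * W powr p"
      using Z0 W dd T by (simp add: powr_mult)
    ultimately show ?thesis by simp
  qed
  finally have I2: "I \<le> (2 * Z * W * (2 * dd + T)) powr p * q" .
  have "I powr (1/p) \<le> ((2 * Z * W * (2 * dd + T)) powr p * q) powr (1/p)"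
    using I2 I0 p by (intro powr_mono2) auto
  also have "\<dots> = (2 * Z * W * (2 * dd + T)) * q powr (1/p)"
    using Z0 W dd T q p by (simp add: powr_mult powr_powr)
  finally show ?thesis unfolding W_def by (simp add: algebra_simps)
qed



lemma zero_in_cube: "0 \<in> unit_cube" unfolding unit_cube_def by simp

lemma norm_cube_diff:
  fixes x y :: "real^'d::finite"
  assumes "\<And>i. \<bar>x$i - y$i\<bar> \<le> e"
  shows "norm (x - y) \<le> real CARD('d) * e"
proof -
  have "norm (x - y) \<le> (\<Sum>i\<in>UNIV. \<bar>(x - y)$i\<bar>)" by (rule norm_le_l1_cart)
  also have "\<dots> \<le> (\<Sum>i\<in>(UNIV::'d set). e)" using assms by (intro sum_mono) simp
  finally show ?thesis by simp
qed

lemma bound_f: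
  fixes f :: "real^'d::finite \<Rightarrow> real"
  assumes L: "Lip_derivs r c0 f D" and r: "r > 0" and c0: "c0 > 0"
  shows "bdd_above ((\<lambda>x. \<bar>f x\<bar>) ` unit_cube)"
proof -
  let ?P = "taylor_poly (ipart r) D 0"
  define C1 where "C1 = (\<Sum>\<beta>\<in>{\<beta>::'d\<Rightarrow>nat. mi_order \<beta> \<le> ipart r}. \<bar>D \<beta> 0 / (\<Prod>i\<in>UNIV. fact (\<beta> i))\<bar>)"
  have "\<bar>f x\<bar> \<le> C1 + real CARD('d) ^ ipart r * c0 * real CARD('d) powr r" if x: "x \<in> unit_cube" for x
  proof -
    have xc: "0 \<le> x$i" "x$i \<le> 1" for i using x unfolding unit_cube_def by auto
    have P: "\<bar>?P x\<bar> \<le> C1"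
    proof -
      have "\<bar>?P x\<bar> \<le> (\<Sum>\<beta>\<in>{\<beta>::'d\<Rightarrow>nat. mi_order \<beta> \<le> ipart r}.
          \<bar>D \<beta> 0 / (\<Prod>i\<in>UNIV. fact (\<beta> i)) * (\<Prod>i\<in>UNIV. (x$i - 0$i) ^ \<beta> i)\<bar>)"
        unfolding taylor_poly_def by (rule sum_abs)
      also have "\<dots> \<le> C1" unfolding C1_def
      proof (rule sum_mono)
        fix \<beta> :: "'d \<Rightarrow> nat"
        have "\<bar>\<Prod>i\<in>UNIV. (x$i - 0$i) ^ \<beta> i\<bar> \<le> 1"
          unfolding abs_prod using xc by (intro prod_le_1) (auto simp: power_abs intro: power_le_one)
        then show "\<bar>D \<beta> 0 / (\<Prod>i\<in>UNIV. fact (\<beta> i)) * (\<Prod>i\<in>UNIV. (x$i - 0$i) ^ \<beta> i)\<bar>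
            \<le> \<bar>D \<beta> 0 / (\<Prod>i\<in>UNIV. fact (\<beta> i))\<bar>"
          unfolding abs_mult by (rule mult_left_le[OF _ abs_ge_zero])
      qed
      finally show ?thesis .
    qed
    have n: "norm (x - 0) \<le> real CARD('d) * 1" by (rule norm_cube_diff) (use xc in auto)
    have "norm (x - 0) powr r \<le> real CARD('d) powr r" using n r by (intro powr_mono2) auto
    then have "real CARD('d) ^ ipart r * c0 * norm (x - 0) powr r \<le> real CARD('d) ^ ipart r * c0 * real CARD('d) powr r"
      using c0 by (intro mult_left_mono) auto
    moreover have "\<bar>f x - ?P x\<bar> \<le> real CARD('d) ^ ipart r * c0 * norm (x - 0) powr r"
      by (rule taylor_main[OF L r c0 zero_in_cube x])
    ultimately show ?thesis using P by linarith
  qed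
  then show ?thesis by (intro bdd_aboveI[where M="C1 + real CARD('d) ^ ipart r * c0 * real CARD('d) powr r"]) auto
qed

lemma center_in_cube:
  assumes "k \<in> cube_idx Ns" "Ns > 0"
  shows "center Ns k \<in> unit_cube"
proof -
  have "k i < Ns" for i using assms unfolding cube_idx_def by auto
  then have "real (k i) + 1/2 \<le> real Ns" for i
  proof -
    have "Suc (k i) \<le> Ns" using \<open>k i < Ns\<close> by (simp add: Suc_le_eq)
    then have "real (Suc (k i)) \<le> real Ns" by (simp only: of_nat_le_iff)
    then show ?thesis by simp
  qed
  then show ?thesis using assms(2) unfolding unit_cube_def by (auto simp: center_comp field_simps)
qed

lemma local_taylor:
  fixes f :: "real^'d::finite \<Rightarrow> real"
  assumes L: "Lip_derivs r c0 f D" and r: "r > 0" and c0: "c0 > 0"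
    and Ns: "Ns > 0" and \<tau>: "0 < \<tau>" "\<tau> \<le> 1/(2*real Ns)"
    and x: "x \<in> unit_cube" and k: "k \<in> cube_idx Ns" and nz: "N1 Ns (center Ns k) \<tau> x \<noteq> 0"
  shows "\<bar>f x - taylor_poly (ipart r) D (center Ns k) x\<bar>
           \<le> real CARD('d) ^ ipart r * c0 * real CARD('d) powr r * real Ns powr (-r)"
proof -
  have "\<bar>x$i - center Ns k $ i\<bar> \<le> 1 / real Ns" for i
    using N1_nz[OF Ns \<tau>(1) nz, of i] \<tau>(2) by simp
  then have n: "norm (x - center Ns k) \<le> real CARD('d) * (1 / real Ns)" by (rule norm_cube_diff)
  have "norm (x - center Ns k) powr r \<le> (real CARD('d) * (1 / real Ns)) powr r"
    using n r by (intro powr_mono2) auto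
  also have "\<dots> = real CARD('d) powr r * real Ns powr (-r)"
  proof -
    have "(real CARD('d) * (1 / real Ns)) powr r = real CARD('d) powr r * (1 / real Ns) powr r"
      by (rule powr_mult)
    moreover have "(1 / real Ns) powr r = real Ns powr (-r)"
      using Ns by (simp only: powr_divide[of 1 "real Ns"] powr_minus_divide powr_one_eq_one)
    ultimately show ?thesis by simp
  qed
  finally have A: "real CARD('d) ^ ipart r * c0 * norm (x - center Ns k) powr r \<le>
      real CARD('d) ^ ipart r * c0 * (real CARD('d) powr r * real Ns powr (-r))"
    using c0 by (intro mult_left_mono) auto
  have B: "\<bar>f x - taylor_poly (ipart r) D (center Ns k) x\<bar> \<le> real CARD('d) ^ ipart r * c0 * norm (x - center Ns k) powr r"
    by (rule taylor_main[OF L r c0 center_in_cube[OF k Ns] x])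
  have "\<bar>f x - taylor_poly (ipart r) D (center Ns k) x\<bar> \<le> real CARD('d) ^ ipart r * c0 * (real CARD('d) powr r * real Ns powr (-r))"
    by (rule order_trans[OF B A])
  then show ?thesis by (simp only: mult.assoc)
qed



lemma poly_vanish:
  fixes f :: "real^'d::finite \<Rightarrow> real"
  assumes L: "Lip_derivs r c0 f D" and Ns: "Ns > 0" and \<tau>: "0 < \<tau>" "\<tau> \<le> 1/(2*real Ns)"
    and x: "x \<in> unit_cube" and k': "k' \<in> cube_idx Ns" and nz: "N1 Ns (center Ns k') \<tau> x \<noteq> 0"
    and supp: "\<forall>y\<in>unit_cube. f y \<noteq> 0 \<longrightarrow> (\<exists>k\<in>S. \<forall>l. real (k l) / real N \<le> y$l \<and> y$l \<le> (real (k l) + 1) / real N)"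
    and notR: "\<not> (\<exists>k\<in>S. \<forall>l. real (k l) / real N - 2 / real Ns \<le> x$l \<and> x$l \<le> (real (k l) + 1) / real N + 2 / real Ns)"
  shows "taylor_poly (ipart r) D (center Ns k') x = 0"
proof -
  define \<xi> where "\<xi> = center Ns k'"
  define h where "h = 1 / (2 * real Ns)"
  have h0: "h > 0" using Ns unfolding h_def by simp
  define U where "U = box (\<chi> l. \<xi>$l - h) (\<chi> l. \<xi>$l + h)"
  have memU: "y \<in> U \<longleftrightarrow> (\<forall>l. \<xi>$l - h < y$l \<and> y$l < \<xi>$l + h)" for y
    unfolding U_def mem_box_cart by simp
  have k'l: "k' l < Ns" for l using k' unfolding cube_idx_def by auto
  have \<xi>lo: "\<xi>$l - h = real (k' l) / real Ns" for l
    unfolding \<xi>_def center_comp h_def using Ns by (simp add: field_simps)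
  have \<xi>hi: "\<xi>$l + h = (real (k' l) + 1) / real Ns" for l
    unfolding \<xi>_def center_comp h_def using Ns by (simp add: field_simps)
  have \<xi>hi1: "\<xi>$l + h \<le> 1" for l
  proof -
    have "Suc (k' l) \<le> Ns" using k'l[of l] by (simp add: Suc_le_eq)
    then have "real (k' l) + 1 \<le> real Ns" by (metis of_nat_Suc of_nat_le_iff add.commute)
    then show ?thesis unfolding \<xi>hi using Ns by (simp add: field_simps)
  qed
  have \<xi>lo0: "0 \<le> \<xi>$l - h" for l unfolding \<xi>lo by simp
  have Usub: "U \<subseteq> unit_cube"
  proof
    fix y assume "y \<in> U"
    then have "\<xi>$l - h < y$l \<and> y$l < \<xi>$l + h" for l using memU by auto
    then show "y \<in> unit_cube" unfolding unit_cube_def using \<xi>lo0 \<xi>hi1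
      by (auto, smt (verit), smt (verit))
  qed
  have xl: "\<bar>x$l - \<xi>$l\<bar> < 2 * h" for l
    using N1_nz[OF Ns \<tau>(1) nz, of l] \<tau>(2) unfolding \<xi>_def h_def by simp
  have f0: "\<forall>y\<in>U. f y = 0"
  proof (rule ballI, rule ccontr)
    fix y assume yU: "y \<in> U" and "f y \<noteq> 0"
    then obtain k where k: "k \<in> S" and yk: "\<forall>l. real (k l) / real N \<le> y$l \<and> y$l \<le> (real (k l) + 1) / real N"
      using supp Usub by blast
    have "real (k l) / real N - 2 / real Ns \<le> x$l \<and> x$l \<le> (real (k l) + 1) / real N + 2 / real Ns" for l
    proof -
      have a: "\<xi>$l - h < y$l \<and> y$l < \<xi>$l + h" using yU memU by auto
      have b: "2 / real Ns = 4 * h" unfolding h_def by simp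
      show ?thesis using a b xl[of l] yk h0 by (smt (verit))
    qed
    then show False using notR k by blast
  qed
  have \<xi>U: "\<xi> \<in> U" unfolding memU using h0 by simp
  have pd: "partial_derivs (ipart r) f D" using L unfolding Lip_derivs_def by simp
  have "D \<beta> \<xi> = 0" if "mi_order \<beta> \<le> ipart r" for \<beta>
    by (rule derivs_vanish[OF pd _ Usub f0 that \<xi>U]) (simp add: U_def open_box)
  then show ?thesis unfolding taylor_poly_def \<xi>_def[symmetric] by simp
qed



lemma pw_helper:
  fixes g a b A B IL IR p :: real
  assumes p: "p > 0" and ab: "0 \<le> a" "0 \<le> b" "a \<le> A" "b \<le> B"
    and IL: "a \<noteq> 0 \<Longrightarrow> 1 \<le> IL" "0 \<le> IL" and IR: "b \<noteq> 0 \<Longrightarrow> 1 \<le> IR" "0 \<le> IR"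
    and g: "\<bar>g\<bar> \<le> a + b"
  shows "\<bar>g\<bar> powr p \<le> 2 powr p * (A powr p * IL + B powr p * IR)"
proof -
  have "\<bar>g\<bar> powr p \<le> (2 * max a b) powr p" using g ab p by (intro powr_mono2) auto
  also have "\<dots> = 2 powr p * max a b powr p" using ab by (simp add: powr_mult)
  also have "max a b powr p \<le> a powr p + b powr p"
    by (cases "a \<le> b") (auto simp: max_def)
  also have "a powr p \<le> A powr p * IL"
  proof (cases "a = 0")
    case True then show ?thesis using IL by simp
  next
    case False
    then have "a powr p \<le> A powr p" using ab p by (intro powr_mono2) auto
    also have "\<dots> \<le> A powr p * IL" using IL(1)[OF False] by (simp add: mult_le_cancel_left1)
    finally show ?thesis .
  qed
  also have "b powr p \<le> B powr p * IR"
  proof (cases "b = 0")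
    case True then show ?thesis using IR by simp
  next
    case False
    then have "b powr p \<le> B powr p" using ab p by (intro powr_mono2) auto
    also have "\<dots> \<le> B powr p * IR" using IR(1)[OF False] by (simp add: mult_le_cancel_left1)
    finally show ?thesis .
  qed
  finally show ?thesis by simp
qed

lemma prod_split_const:
  fixes i :: "'d::finite"
  shows "(\<Prod>l\<in>UNIV. if l = i then (a::real) else c) = a * c ^ (CARD('d) - 1)"
proof -
  have "(\<Prod>l\<in>UNIV. if l = i then (a::real) else c) = a * (\<Prod>l\<in>UNIV-{i}. if l = i then a else c)"
    using prod_upd_j[of "\<lambda>l. if l = i then a else c" i] by simp
  also have "(\<Prod>l\<in>UNIV-{i}. if l = i then a else c) = (\<Prod>l\<in>UNIV-{i}. c)" by (rule prod.cong) auto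
  also have "\<dots> = c ^ (CARD('d) - 1)" by (simp add: card_Diff_singleton)
  finally show ?thesis .
qed



theorem lemma2:
  fixes r c0 :: real
  assumes "r > 0" and "c0 > 0"
  shows "\<exists>c2 c3 :: real \<Rightarrow> real. \<forall>(p::real) (N::nat) (s::nat) (Ns::nat)
           (f :: real^'d::finite \<Rightarrow> real) D (\<tau>::real).
     1 \<le> p \<and> 1 \<le> N \<and> 1 \<le> s \<and> s \<le> N ^ CARD('d) \<and> 4 * N \<le> Ns \<and>
     Lip_derivs r c0 f D \<and> sparse N s f \<and>
     0 < \<tau> \<and> \<tau> \<le> real s / (2 * real N ^ CARD('d) * real Ns powr (1 + p * r))
     \<longrightarrow>
     Lp_norm_cube p (\<lambda>x. f x - N2 (ipart r) D Ns \<tau> x)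
        \<le> c2 (SUP x\<in>unit_cube. \<bar>f x\<bar>) * real Ns powr (- r)
           * (real s / real N ^ CARD('d)) powr (1 / p) \<and>
     (\<forall>x\<in>unit_cube. \<bar>N2 (ipart r) D Ns \<tau> x\<bar> \<le> c3 (SUP x\<in>unit_cube. \<bar>f x\<bar>))"
proof -
  define KT where "KT = real CARD('d) ^ ipart r"
  define E0 where "E0 = KT * c0 * real CARD('d) powr r"
  define TT where "TT = (2::real) ^ CARD('d)"
  define dd where "dd = real CARD('d)"
  define c3 where "c3 = (\<lambda>M::real. TT * (\<bar>M\<bar> + E0))"
  define c2 where "c2 = (\<lambda>M::real. 2 * ((1 + TT) * (\<bar>M\<bar> + E0)) * (2 * dd + TT))"
  have E0: "0 \<le> E0" unfolding E0_def KT_def using assms by simp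
  have TT1: "1 \<le> TT" unfolding TT_def by simp
  have dd0: "0 \<le> dd" unfolding dd_def by simp
  show ?thesis
  proof (rule exI[of _ c2], rule exI[of _ c3], intro allI impI, goal_cases)
    case (1 p N s Ns f D \<tau>)
    note H = 1
    then have p: "1 \<le> p" and N: "1 \<le> N" and s1: "1 \<le> s" and sN: "s \<le> N ^ CARD('d)"
      and NNs: "4 * N \<le> Ns" and L: "Lip_derivs r c0 f D" and sp: "sparse N s f"
      and \<tau>0: "0 < \<tau>" and \<tau>s: "\<tau> \<le> real s / (2 * real N ^ CARD('d) * real Ns powr (1 + p * r))"
      by auto
    define X where "X = real Ns"
    have Ns0: "Ns > 0" using N NNs by simp
    have X4N: "4 * real N \<le> X" unfolding X_def using NNs by (metis of_nat_le_iff of_nat_mult of_nat_numeral)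
    have X1: "1 \<le> X" using X4N N by simp
    have N0: "0 < real N" using N by simp
    define q where "q = real s / real N ^ CARD('d)"
    have q0: "0 < q" unfolding q_def using s1 N by simp
    have q1: "q \<le> 1" unfolding q_def using sN N by (simp add: of_nat_le_iff[symmetric] divide_le_eq_1)
    have Xpr: "1 \<le> X powr (p * r)" by (rule ge_one_powr_ge_zero) (use X1 p assms in auto)
    have Xp1: "X powr (1 + p * r) = X * X powr (p * r)" using X1 by (simp add: powr_add)
    have \<tau>q: "\<tau> \<le> q / (2 * X * X powr (p * r))"
      using \<tau>s unfolding q_def X_def[symmetric] Xp1 by (simp add: field_simps)
    have \<tau>h: "\<tau> \<le> 1 / (2 * real Ns)"
    proof -
      have "q / (2 * X * X powr (p * r)) \<le> 1 / (2 * X)"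
        using q0 q1 X1 Xpr by (simp add: field_simps)
      then show ?thesis using \<tau>q unfolding X_def by simp
    qed
    define M where "M = (SUP x\<in>unit_cube. \<bar>f x\<bar>)"
    have fM: "\<bar>f x\<bar> \<le> M" if "x \<in> unit_cube" for x
      unfolding M_def by (rule cSUP_upper[OF that bound_f[OF L assms]])
    have M0: "0 \<le> M" using fM[OF zero_in_cube] by simp
    define P where "P (k::'d\<Rightarrow>nat) (x::real^'d) = taylor_poly (ipart r) D (center Ns k) x" for k x
    define n1 where "n1 (k::'d\<Rightarrow>nat) (x::real^'d) = N1 Ns (center Ns k) \<tau> x" for k x
    have N2e: "N2 (ipart r) D Ns \<tau> x = (\<Sum>k\<in>cube_idx Ns. n1 k x * P k x)" for x
      unfolding N2_def n1_def P_def by (simp add: mult.commute)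
    have Xr0: "0 \<le> X powr (-r)" by simp
    have Xr1: "X powr (-r) \<le> 1"
    proof -
      have "1 \<le> X powr r" by (rule ge_one_powr_ge_zero) (use X1 assms in auto)
      then show ?thesis by (simp add: powr_minus_divide divide_le_eq_1)
    qed
    have loc: "\<bar>f x - P k x\<bar> \<le> E0 * X powr (-r)"
      if "x \<in> unit_cube" "k \<in> cube_idx Ns" "n1 k x \<noteq> 0" for x k
      using local_taylor[OF L assms Ns0 \<tau>0 \<tau>h that(1,2)] that(3)
      unfolding n1_def P_def E0_def KT_def X_def by simp
    have Pb: "\<bar>P k x\<bar> \<le> M + E0" if "x \<in> unit_cube" "k \<in> cube_idx Ns" "n1 k x \<noteq> 0" for x k
    proof -
      have "E0 * X powr (-r) \<le> E0" using E0 Xr1 by (simp add: mult_left_le)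
      then show ?thesis using loc[OF that] fM[OF that(1)] by linarith
    qed
    have part3: "\<forall>x\<in>unit_cube. \<bar>N2 (ipart r) D Ns \<tau> x\<bar> \<le> c3 M"
    proof
      fix x :: "real^'d" assume x: "x \<in> unit_cube"
      have "\<bar>\<Sum>k\<in>cube_idx Ns. N1 Ns (center Ns k) \<tau> x * P k x\<bar> \<le> 2 ^ CARD('d) * (M + E0)"
        by (rule sum_N1_bound[OF Ns0 \<tau>0 \<tau>h]) (use M0 E0 Pb[OF x] in \<open>auto simp: n1_def\<close>)
      then show "\<bar>N2 (ipart r) D Ns \<tau> x\<bar> \<le> c3 M"
        unfolding N2e c3_def TT_def n1_def using M0 by simp
    qed
    have lpres: "Lp_norm_cube p (\<lambda>x. f x - N2 (ipart r) D Ns \<tau> x)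
        \<le> c2 M * real Ns powr (- r) * (real s / real N ^ CARD('d)) powr (1 / p)"
      proof -
        obtain S where S: "S \<subseteq> cube_idx N" "card S \<le> s"
          and supp0: "\<forall>x\<in>unit_cube. f x \<noteq> 0 \<longrightarrow> x \<in> (\<Union>k\<in>S. subcube N k)"
          using sp unfolding sparse_def by blast
        have finS: "finite S" using S(1) finite_cube_idx finite_subset by blast
        have supp: "\<forall>y\<in>unit_cube. f y \<noteq> 0 \<longrightarrow> (\<exists>k\<in>S. \<forall>l. real (k l) / real N \<le> y$l \<and> y$l \<le> (real (k l) + 1) / real N)"
          using supp0 unfolding subcube_def by blast
        define lo where "lo (k::'d\<Rightarrow>nat) i = X * real (k i) / real N - 1" for k i
        define hi where "hi (k::'d\<Rightarrow>nat) i = X * (real (k i) + 1) / real N + 1" for k i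
        define J where "J k i = {j::nat. lo k i \<le> real j \<and> real j \<le> hi k i}" for k i
        define Lbox where "Lbox (k::'d\<Rightarrow>nat) (i::'d) (j::nat) =
          cbox (\<chi> l. if l = i then real j / X - \<tau> else real (k l) / real N)
               (\<chi> l. if l = i then real j / X + \<tau> else (real (k l) + 1) / real N)" for k i j
        define Rbox where "Rbox (k::'d\<Rightarrow>nat) = cbox (\<chi> l. real (k l) / real N - 2 / X)
               (\<chi> l. (real (k l) + 1) / real N + 2 / X)" for k
        define IL where "IL (x::real^'d) = (\<Sum>k\<in>S. \<Sum>i\<in>UNIV. \<Sum>j\<in>J k i. indicator (Lbox k i j) x :: real)" for x
        define IR where "IR (x::real^'d) = (\<Sum>k\<in>S. indicator (Rbox k) x :: real)" for x
        define A where "A = M * (1 + TT)"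
        define Bc where "Bc = TT * E0 * X powr (-r)"
        define Hf where "Hf x = 2 powr p * (A powr p * IL x + Bc powr p * IR x)" for x
        have finJ: "finite (J k i)" for k i
        proof -
          have "J k i \<subseteq> {..nat \<lceil>hi k i\<rceil>}"
          proof
            fix j assume "j \<in> J k i"
            then have "real j \<le> hi k i" unfolding J_def by simp
            then have "real j \<le> real_of_int \<lceil>hi k i\<rceil>" using le_of_int_ceiling[of "hi k i"] by linarith
            then have "int j \<le> \<lceil>hi k i\<rceil>" by (metis of_int_le_iff of_int_of_nat_eq)
            then show "j \<in> {..nat \<lceil>hi k i\<rceil>}" by simp
          qed
          then show ?thesis by (rule finite_subset) simp
        qed
        have IL0: "0 \<le> IL x" for x unfolding IL_def by (intro sum_nonneg) auto
        have IR0: "0 \<le> IR x" for x unfolding IR_def by (intro sum_nonneg) auto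
        have iL: "integrable lborel IL"
          unfolding IL_def Lbox_def by (simp add: box_indicator(1))
        have iR: "integrable lborel IR"
          unfolding IR_def Rbox_def by (simp add: box_indicator(1))
        have Hint: "integrable lborel Hf"
          unfolding Hf_def using iL iR by simp
        have Hnn: "0 \<le> Hf x" for x unfolding Hf_def using IL0 IR0 by simp
        have point: "\<bar>f x - N2 (ipart r) D Ns \<tau> x\<bar> powr p \<le> Hf x" if x: "x \<in> unit_cube" for x
        proof -
          define S1 where "S1 = (\<Sum>k\<in>cube_idx Ns. n1 k x)"
          define a where "a = \<bar>f x * (1 - S1)\<bar>"
          define b where "b = \<bar>\<Sum>k\<in>cube_idx Ns. n1 k x * (f x - P k x)\<bar>"
          have sd: "(\<Sum>k\<in>cube_idx Ns. n1 k x * (f x - P k x)) = f x * S1 - (\<Sum>k\<in>cube_idx Ns. n1 k x * P k x)"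
            unfolding S1_def by (simp add: right_diff_distrib sum_subtractf sum_distrib_left mult.commute)
          have dec: "f x - N2 (ipart r) D Ns \<tau> x = f x * (1 - S1) + (\<Sum>k\<in>cube_idx Ns. n1 k x * (f x - P k x))"
            unfolding sd N2e by (simp add: algebra_simps)
          have S1b: "\<bar>S1\<bar> \<le> TT"
          proof -
            have "\<bar>\<Sum>k\<in>cube_idx Ns. N1 Ns (center Ns k) \<tau> x * 1\<bar> \<le> 2 ^ CARD('d) * 1"
              by (rule sum_N1_bound[OF Ns0 \<tau>0 \<tau>h]) auto
            then show ?thesis unfolding S1_def n1_def TT_def by simp
          qed
          have a_le: "a \<le> A"
          proof -
            have "\<bar>1 - S1\<bar> \<le> 1 + TT" using S1b by linarith
            then have "\<bar>f x\<bar> * \<bar>1 - S1\<bar> \<le> M * (1 + TT)"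
              using fM[OF x] by (intro mult_mono) auto
            then show ?thesis unfolding a_def A_def abs_mult .
          qed
          have b_le: "b \<le> Bc"
          proof -
            have "\<bar>\<Sum>k\<in>cube_idx Ns. N1 Ns (center Ns k) \<tau> x * (f x - P k x)\<bar> \<le> 2 ^ CARD('d) * (E0 * X powr (-r))"
              by (rule sum_N1_bound[OF Ns0 \<tau>0 \<tau>h]) (use E0 loc[OF x] in \<open>auto simp: n1_def\<close>)
            then show ?thesis unfolding b_def Bc_def n1_def TT_def by (simp add: mult.assoc)
          qed
          have a_IL: "1 \<le> IL x" if "a \<noteq> 0"
          proof -
            from that have fx: "f x \<noteq> 0" and S1ne: "S1 \<noteq> 1" unfolding a_def by auto
            obtain k where k: "k \<in> S" and xk: "\<forall>l. real (k l) / real N \<le> x$l \<and> x$l \<le> (real (k l) + 1) / real N"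
              using supp x fx by blast
            have "\<not> (\<forall>i. \<forall>j::nat. \<tau> < \<bar>x$i - real j / real Ns\<bar>)"
              using sum_N1_one[OF Ns0 \<tau>0 x] S1ne unfolding S1_def n1_def by auto
            then obtain i j where ij: "\<bar>x$i - real j / X\<bar> \<le> \<tau>" unfolding X_def by (auto simp: not_less)
            have hX: "\<tau> \<le> 1 / X" using \<tau>h X1 unfolding X_def by (simp add: field_simps)
            have jJ: "j \<in> J k i"
            proof -
              have l1: "real (k i) / real N - 1 / X \<le> real j / X" using ij hX xk[rule_format, of i] by (simp add: abs_le_iff)
              have m1: "X * (real (k i) / real N - 1 / X) \<le> X * (real j / X)" using l1 X1 by (intro mult_left_mono) auto
              have e1: "X * (real (k i) / real N - 1 / X) = X * real (k i) / real N - 1"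
                using X1 by (simp add: field_simps)
              have e2: "X * (real j / X) = real j" using X1 by simp
              have r1: "lo k i \<le> real j" unfolding lo_def using m1 e1 e2 by linarith
              have l2: "real j / X \<le> (real (k i) + 1) / real N + 1 / X" using ij hX xk[rule_format, of i] by (simp add: abs_le_iff)
              have m2: "X * (real j / X) \<le> X * ((real (k i) + 1) / real N + 1 / X)" using l2 X1 by (intro mult_left_mono) auto
              have e3: "X * ((real (k i) + 1) / real N + 1 / X) = X * (real (k i) + 1) / real N + 1"
                using X1 by (simp add: field_simps)
              have r2: "real j \<le> hi k i" unfolding hi_def using m2 e3 e2 by linarith
              show ?thesis unfolding J_def using r1 r2 by simp
            qed
            have xL: "x \<in> Lbox k i j"
              unfolding Lbox_def mem_box_cart using ij xk by (auto simp: abs_le_iff)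
            have "1 = (indicator (Lbox k i j) x :: real)" using xL by simp
            also have "\<dots> \<le> (\<Sum>j\<in>J k i. indicator (Lbox k i j) x)"
              by (rule member_le_sum) (use jJ finJ in auto)
            also have "\<dots> \<le> (\<Sum>i\<in>UNIV. \<Sum>j\<in>J k i. indicator (Lbox k i j) x)"
              by (rule member_le_sum) (auto intro: sum_nonneg)
            also have "\<dots> \<le> IL x" unfolding IL_def
              by (rule member_le_sum) (use k finS in \<open>auto intro: sum_nonneg\<close>)
            finally show ?thesis .
          qed
          have b_IR: "1 \<le> IR x" if "b \<noteq> 0"
          proof -
            from that obtain k' where k': "k' \<in> cube_idx Ns" and t: "n1 k' x * (f x - P k' x) \<noteq> 0"
              unfolding b_def by (metis (no_types, lifting) sum.neutral abs_zero)
            have "\<exists>k\<in>S. x \<in> Rbox k"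
            proof (rule ccontr)
              assume nR: "\<not> (\<exists>k\<in>S. x \<in> Rbox k)"
              have notR: "\<not> (\<exists>k\<in>S. \<forall>l. real (k l) / real N - 2 / real Ns \<le> x$l \<and> x$l \<le> (real (k l) + 1) / real N + 2 / real Ns)"
                using nR unfolding Rbox_def mem_box_cart X_def by auto
              have "f x = 0"
              proof (rule ccontr)
                assume "f x \<noteq> 0"
                then obtain k where k: "k \<in> S" and xk: "\<forall>l. real (k l) / real N \<le> x$l \<and> x$l \<le> (real (k l) + 1) / real N"
                  using supp x by blast
                have "0 \<le> 2 / real Ns" by simp
                then have "\<forall>l. real (k l) / real N - 2 / real Ns \<le> x$l \<and> x$l \<le> (real (k l) + 1) / real N + 2 / real Ns"
                  using xk by (smt (verit))
                then show False using notR k by blast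
              qed
              moreover have "P k' x = 0" unfolding P_def
                by (rule poly_vanish[OF L Ns0 \<tau>0 \<tau>h x k' _ supp notR]) (use t in \<open>auto simp: n1_def\<close>)
              ultimately show False using t by simp
            qed
            then obtain k where k: "k \<in> S" "x \<in> Rbox k" by blast
            have "1 = (indicator (Rbox k) x :: real)" using k by simp
            also have "\<dots> \<le> IR x" unfolding IR_def by (rule member_le_sum) (use k finS in auto)
            finally show ?thesis .
          qed
          have g: "\<bar>f x - N2 (ipart r) D Ns \<tau> x\<bar> \<le> a + b" unfolding dec a_def b_def by (rule abs_triangle_ineq)
          have "\<bar>f x - N2 (ipart r) D Ns \<tau> x\<bar> powr p \<le> 2 powr p * (A powr p * IL x + Bc powr p * IR x)"
            by (rule pw_helper[of p a b A Bc "IL x" "IR x"])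
               (use p a_le b_le a_IL b_IR IL0 IR0 g in \<open>auto simp: a_def b_def\<close>)
          then show ?thesis unfolding Hf_def .
        qed
        have Lp: "Lp_norm_cube p (\<lambda>x. f x - N2 (ipart r) D Ns \<tau> x) \<le> (integral\<^sup>L lborel Hf) powr (1/p)"
          by (rule Lp_bound) (use p Hint Hnn point in auto)
        define mL where "mL = (\<Sum>k\<in>S. \<Sum>i\<in>UNIV. \<Sum>j\<in>J k i. measure lborel (Lbox k i j))"
        define mR where "mR = (\<Sum>k\<in>S. measure lborel (Rbox k))"
        have intH: "integral\<^sup>L lborel Hf = 2 powr p * (A powr p * mL + Bc powr p * mR)"
        proof -
          have "integral\<^sup>L lborel IL = mL"
            unfolding IL_def mL_def Lbox_def by (simp add: box_indicator integral_sum integrable_sum)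
          moreover have "integral\<^sup>L lborel IR = mR"
            unfolding IR_def mR_def Rbox_def by (simp add: box_indicator integral_sum integrable_sum)
          ultimately show ?thesis unfolding Hf_def using iL iR by simp
        qed
        have Lb: "measure lborel (Lbox k i j) = 2 * \<tau> * (1 / real N) ^ (CARD('d) - 1)" for k i j
        proof -
          have "measure lborel (Lbox k i j) =
              (\<Prod>l\<in>UNIV. (\<chi> l. if l = i then real j / X + \<tau> else (real (k l) + 1) / real N)$l
                          - (\<chi> l. if l = i then real j / X - \<tau> else real (k l) / real N)$l)"
            unfolding Lbox_def by (rule content_box_le) (use \<tau>0 N0 in \<open>auto simp: divide_right_mono\<close>)
          also have "\<dots> = (\<Prod>l\<in>UNIV. if l = i then 2 * \<tau> else 1 / real N)"
            by (rule prod.cong) (use N0 in \<open>auto simp: field_simps\<close>)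
          also have "\<dots> = 2 * \<tau> * (1 / real N) ^ (CARD('d) - 1)" by (rule prod_split_const)
          finally show ?thesis .
        qed
        have XN4: "4 \<le> X / real N" using X4N N0 by (simp add: field_simps)
        have cardJ: "real (card (J k i)) \<le> 2 * X / real N" for k i
        proof -
          have lohi: "lo k i \<le> hi k i" "0 \<le> hi k i"
            unfolding lo_def hi_def using N0 X1 by (auto simp: field_simps)
          have "real (card (J k i)) \<le> hi k i - lo k i + 1" unfolding J_def by (rule card_nat_interval[OF lohi])
          also have "hi k i - lo k i + 1 = X / real N + 3" unfolding hi_def lo_def using N0 by (simp add: field_simps)
          also have "\<dots> \<le> 2 * X / real N" using XN4 by simp
          finally show ?thesis .
        qed
        define l0 where "l0 = 2 * \<tau> * (1 / real N) ^ (CARD('d) - 1)"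
        have l00: "0 \<le> l0" unfolding l0_def using \<tau>0 by simp
        have mLb1: "mL \<le> real s * (dd * (2 * X / real N * l0))"
        proof -
          have sj: "(\<Sum>j\<in>J k i. measure lborel (Lbox k i j)) \<le> 2 * X / real N * l0" for k i
          proof -
            have "(\<Sum>j\<in>J k i. measure lborel (Lbox k i j)) = real (card (J k i)) * l0"
              unfolding Lb l0_def[symmetric] by simp
            also have "\<dots> \<le> 2 * X / real N * l0" using cardJ[of k i] l00 by (rule mult_right_mono)
            finally show ?thesis .
          qed
          have si: "(\<Sum>i\<in>UNIV. \<Sum>j\<in>J k i. measure lborel (Lbox k i j)) \<le> dd * (2 * X / real N * l0)" for k
            using sum_bounded_above[of UNIV "\<lambda>i. \<Sum>j\<in>J k i. measure lborel (Lbox k i j)" "2 * X / real N * l0"] sj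
            unfolding dd_def by simp
          have "mL \<le> real (card S) * (dd * (2 * X / real N * l0))"
            unfolding mL_def using sum_bounded_above[of S _ "dd * (2 * X / real N * l0)"] si by simp
          also have "\<dots> \<le> real s * (dd * (2 * X / real N * l0))"
            using S(2) dd0 X1 N0 l00 by (intro mult_right_mono) auto
          finally show ?thesis .
        qed
        have pw: "real N ^ CARD('d) = real N * real N ^ (CARD('d) - 1)"
        proof -
          have "CARD('d) = Suc (CARD('d) - 1)" using card_pos_d[where 'd='d] by simp
          then show ?thesis by (metis power_Suc)
        qed
        have eqL: "real s * (dd * (2 * X / real N * l0)) = 4 * dd * X * \<tau> * q"
          unfolding l0_def q_def pw using N0 by (simp add: power_one_over)
        have tb: "4 * dd * X * \<tau> * q \<le> 2 * dd * q * (X powr (-r)) powr p"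
        proof -
          have "4 * dd * X * \<tau> * q = (4 * dd * X * q) * \<tau>" by simp
          also have "\<dots> \<le> (4 * dd * X * q) * (q / (2 * X * X powr (p * r)))"
            using \<tau>q dd0 X1 q0 by (intro mult_left_mono) auto
          also have "\<dots> = 2 * dd * (q * q) / X powr (p * r)" using X1 by (simp add: field_simps)
          also have "\<dots> \<le> 2 * dd * q / X powr (p * r)"
            using q0 q1 dd0 Xpr by (intro divide_right_mono mult_left_mono) (auto simp: mult_le_cancel_left1)
          also have "\<dots> = 2 * dd * q * (X powr (-r)) powr p"
          proof -
            have "(X powr (-r)) powr p = X powr (- (p * r))" by (simp add: powr_powr mult.commute)
            also have "\<dots> = 1 / X powr (p * r)" by (rule powr_minus_divide)
            finally show ?thesis by simp
          qed
          finally show ?thesis .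
        qed
        have mLb: "mL \<le> 2 * dd * q * (X powr (-r)) powr p" using mLb1 eqL tb by linarith
        have mRb: "mR \<le> TT * q"
        proof -
          have Rb: "measure lborel (Rbox k) \<le> TT / real N ^ CARD('d)" for k
          proof -
            have "measure lborel (Rbox k) =
              (\<Prod>l\<in>UNIV. (\<chi> l. (real (k l) + 1) / real N + 2 / X)$l - (\<chi> l. real (k l) / real N - 2 / X)$l)"
              unfolding Rbox_def
            proof (rule content_box_le)
              fix l
              have "real (k l) / real N \<le> (real (k l) + 1) / real N" by (rule divide_right_mono) (use N0 in auto)
              moreover have "0 \<le> 2 / X" using X1 by simp
              ultimately have "real (k l) / real N - 2 / X \<le> (real (k l) + 1) / real N + 2 / X" by linarith
              then show "(\<chi> l. real (k l) / real N - 2 / X) $ l \<le> (\<chi> l. (real (k l) + 1) / real N + 2 / X) $ l"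
                by simp
            qed
            also have "\<dots> = (\<Prod>l\<in>(UNIV::'d set). 1 / real N + 4 / X)"
              by (rule prod.cong) (use N0 in \<open>auto simp: field_simps\<close>)
            also have "\<dots> = (1 / real N + 4 / X) ^ CARD('d)" by simp
            also have "\<dots> \<le> (2 / real N) ^ CARD('d)"
            proof (rule power_mono)
              have "4 / X \<le> 1 / real N" using X4N N0 X1 by (simp add: field_simps)
              then show "1 / real N + 4 / X \<le> 2 / real N" by simp
            qed (use X1 in auto)
            also have "\<dots> = TT / real N ^ CARD('d)" unfolding TT_def by (simp add: power_divide)
            finally show ?thesis .
          qed
          have "mR \<le> real (card S) * (TT / real N ^ CARD('d))"
            unfolding mR_def using sum_bounded_above[of S _ "TT / real N ^ CARD('d)"] Rb by simp
          also have "\<dots> \<le> real s * (TT / real N ^ CARD('d))"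
            using S(2) TT1 N0 by (intro mult_right_mono) auto
          also have "\<dots> = TT * q" unfolding q_def by simp
          finally show ?thesis .
        qed
        have mL0: "0 \<le> mL" unfolding mL_def by (intro sum_nonneg) auto
        have mR0: "0 \<le> mR" unfolding mR_def by (intro sum_nonneg) auto
        have I0: "0 \<le> integral\<^sup>L lborel Hf" using Hnn by simp
        have A0: "0 \<le> A" unfolding A_def using M0 TT1 by simp
        have AZ: "A \<le> (1 + TT) * (M + E0)" unfolding A_def using E0 TT1 by (simp add: algebra_simps)
        have EZ: "TT * E0 \<le> (1 + TT) * (M + E0)"
        proof -
          have "TT * E0 \<le> (1 + TT) * E0" using E0 by (intro mult_right_mono) auto
          also have "\<dots> \<le> (1 + TT) * (M + E0)" using M0 TT1 by (intro mult_left_mono) auto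
          finally show ?thesis .
        qed
        have "(integral\<^sup>L lborel Hf) powr (1/p) \<le> 2 * ((1 + TT) * (M + E0)) * (2 * dd + TT) * X powr (-r) * q powr (1/p)"
          by (rule fin_bound[OF p X1 assms(1) q0 q1 A0 AZ _ EZ dd0 TT1 mL0 mLb mR0 mRb _ I0])
             (use E0 TT1 in simp, use intH in \<open>simp add: Bc_def\<close>)
        then show ?thesis using Lp unfolding c2_def X_def q_def using M0 by simp
      qed
    show ?case
      using lpres part3 unfolding M_def by blast
  qed
qed


end
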